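(* For any finite group $G$, with $H=A\oplus B$, the bilinear form $(\cdot,\cdot)$ and the involution $x\mapsto x^*$ defined below, there exists $U\in A$ such that $\mathcal H(G)=(H=A\oplus B,(\cdot,\cdot),x\mapsto x^*,U)$ is a structure algebra.
   Context: Construction: $\mathbb C[G]$ is the group algebra, $A$ its center with basis $E_\alpha=\sum_{g\in\alpha}g$ ($\alpha$ conjugacy classes). $M(G)=\operatorname{End}(\mathbb C[G])$ with matrix units $E_{g_1,g_2}$ ($E_{g_1,g_2}(h)=\delta_{g_2,h}g_1$). For each conjugacy class $\beta$ (under simultaneous conjugation) of ordered pairs $(s_1,s_2)$ with $s_1^2=s_2^2=1$ put $E_\beta=\sum_{(s',s'')\in\beta}E_{s',s''}$; $B$ is their span. $V(g)(x)=gxg^{-1}$ extends to $V:\mathbb C[G]\to M(G)$, $V_\alpha=V(E_\alpha)$. The multiplication on $H=A\oplus B$ is that of $A$ and of $B$ plus $E_\alpha E_\beta=V_\alpha E_\beta$, $E_\beta E_\alpha=E_\beta V_\alpha$. The involution $*$ is the linear extension of $g\mapsto g^{-1}$ on $A$ and matrix transposition on $B$ (so $E_\beta^*=E_{\beta^*}$, $\beta^*$ the class of $(s_2,s_1)$). The form is $(x,y)=f(xy)$ with $f$ linear, $f(E_\alpha)=\frac{1}{|G|}\delta_{\alpha,\{1\}}$, $f(E_\beta)=\frac1{|G|}\operatorname{tr}(E_\beta)$. Structure algebra: a tuple $(H=A\oplus B,(\cdot,\cdot),*,U)$ with $H$ finite-dimensional associative over $\mathbb C$, $(\cdot,\cdot)$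 symmetric invariant ($(xy,z)=(x,yz)$), $*$ an involutive antiautomorphism, $U\in A$, such that: (1) $A$ is a subalgebra in the center of $H$ whose unit is that of $H$; (2) $B$ is a two-sided ideal with a unit; (3) $(\cdot,\cdot)|_A,(\cdot,\cdot)|_B$ nondegenerate; (4) $(V_{K_B}(b_1),b_2)=\sum F^{ij}(f_i,b_1)(f_j,b_2)$ for $b_1,b_2\in B$, where $(f_i)$ is a basis of $A$ with inverse Gram matrix $F^{ij}$ and $V_{K_B}(x)=\sum G^{kl}g_kxg_l$ for a basis $(g_k)$ of $B$ with inverse Gram matrix $G^{kl}$; (5) $A^*=A$, $B^*=B$, $(x^*,y^* )=(x,y)$; (6) $U^2=K_{A,*}$; (7) $(U,b)=(K_{B,*},b)$ for $b\in B$; (8) $(aU)^*=aU$ for $a\in A$; here $K_{X,*}=\sum F^{ij}f_if_j^*$ computed in $X=A$ or $B$. *)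

theory Defs
  imports Complex_Main "HOL-Algebra.Group" "HOL-Library.Function_Algebras" "HOL-Library.Product_Plus"
begin

definition direct_sum :: "'h::ab_group_add set \<Rightarrow> 'h set \<Rightarrow> 'h set" where
  "direct_sum A B = {a + b | a b. a \<in> A \<and> b \<in> B}"

definition basis_invgram ::
  "(complex \<Rightarrow> 'h::ab_group_add \<Rightarrow> 'h) \<Rightarrow> ('h \<Rightarrow> 'h \<Rightarrow> complex) \<Rightarrow> 'h set
     \<Rightarrow> nat \<Rightarrow> (nat \<Rightarrow> 'h) \<Rightarrow> (nat \<Rightarrow> nat \<Rightarrow> complex) \<Rightarrow> bool" where
  "basis_invgram scale form X n f F \<longleftrightarrow>
     inj_on f {..<n} \<and> f ` {..<n} \<subseteq> X \<and>
     \<not> module.dependent scale (f ` {..<n}) \<and> module.span scale (f ` {..<n}) = X \<and>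
     (\<forall>i<n. \<forall>k<n. (\<Sum>j<n. F i j * form (f j) (f k)) = (if i = k then 1 else 0)) \<and>
     (\<forall>i<n. \<forall>k<n. (\<Sum>j<n. form (f i) (f j) * F j k) = (if i = k then 1 else 0))"

definition K_star ::
  "(complex \<Rightarrow> 'h::ab_group_add \<Rightarrow> 'h) \<Rightarrow> ('h \<Rightarrow> 'h \<Rightarrow> 'h) \<Rightarrow> ('h \<Rightarrow> 'h)
     \<Rightarrow> nat \<Rightarrow> (nat \<Rightarrow> 'h) \<Rightarrow> (nat \<Rightarrow> nat \<Rightarrow> complex) \<Rightarrow> 'h" where
  "K_star scale mul star n f F = (\<Sum>i<n. \<Sum>j<n. scale (F i j) (mul (f i) (star (f j))))"

definition V_K ::
  "(complex \<Rightarrow> 'h::ab_group_add \<Rightarrow> 'h) \<Rightarrow> ('h \<Rightarrow> 'h \<Rightarrow> 'h)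
     \<Rightarrow> nat \<Rightarrow> (nat \<Rightarrow> 'h) \<Rightarrow> (nat \<Rightarrow> nat \<Rightarrow> complex) \<Rightarrow> 'h \<Rightarrow> 'h" where
  "V_K scale mul m g G x = (\<Sum>k<m. \<Sum>l<m. scale (G k l) (mul (mul (g k) x) (g l)))"

definition structure_algebra ::
  "(complex \<Rightarrow> 'h::ab_group_add \<Rightarrow> 'h) \<Rightarrow> 'h set \<Rightarrow> 'h set \<Rightarrow> ('h \<Rightarrow> 'h \<Rightarrow> 'h) \<Rightarrow> 'h
     \<Rightarrow> ('h \<Rightarrow> 'h \<Rightarrow> complex) \<Rightarrow> ('h \<Rightarrow> 'h) \<Rightarrow> 'h \<Rightarrow> bool" where
  "structure_algebra scale A B mul unit form star U \<longleftrightarrow>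
   (let H = direct_sum A B in
     \<comment> \<open>H = A \<oplus> B is a finite-dimensional complex vector space\<close>
     vector_space scale \<and> module.subspace scale A \<and> module.subspace scale B \<and> A \<inter> B = {0} \<and>
     (\<exists>S. finite S \<and> S \<subseteq> H \<and> module.span scale S = H) \<and>
     \<comment> \<open>H is an associative algebra with unit\<close>
     (\<forall>x\<in>H. \<forall>y\<in>H. mul x y \<in> H) \<and>
     (\<forall>x\<in>H. \<forall>y\<in>H. \<forall>z\<in>H. mul (x + y) z = mul x z + mul y z \<and> mul x (y + z) = mul x y + mul x z) \<and>
     (\<forall>c. \<forall>x\<in>H. \<forall>y\<in>H. mul (scale c x) y = scale c (mul x y) \<and> mul x (scale c y) = scale c (mul x y)) \<and>
     (\<forall>x\<in>H. \<forall>y\<in>H. \<forall>z\<in>H. mul (mul x y) z = mul x (mul y z)) \<and>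
     unit \<in> H \<and> (\<forall>x\<in>H. mul unit x = x \<and> mul x unit = x) \<and>
     \<comment> \<open>symmetric invariant bilinear form\<close>
     (\<forall>x\<in>H. \<forall>y\<in>H. \<forall>z\<in>H. form (x + y) z = form x z + form y z) \<and>
     (\<forall>c. \<forall>x\<in>H. \<forall>y\<in>H. form (scale c x) y = c * form x y) \<and>
     (\<forall>x\<in>H. \<forall>y\<in>H. form x y = form y x) \<and>
     (\<forall>x\<in>H. \<forall>y\<in>H. \<forall>z\<in>H. form (mul x y) z = form x (mul y z)) \<and>
     \<comment> \<open>involutive (linear) antiautomorphism\<close>
     (\<forall>x\<in>H. star x \<in> H) \<and>
     (\<forall>x\<in>H. \<forall>y\<in>H. star (x + y) = star x + star y) \<and>
     (\<forall>c. \<forall>x\<in>H. star (scale c x) = scale c (star x)) \<and>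
     (\<forall>x\<in>H. \<forall>y\<in>H. star (mul x y) = mul (star y) (star x)) \<and>
     (\<forall>x\<in>H. star (star x) = x) \<and>
     \<comment> \<open>U \<in> A\<close>
     U \<in> A \<and>
     \<comment> \<open>(1)\<close>
     (\<forall>x\<in>A. \<forall>y\<in>A. mul x y \<in> A) \<and> (\<forall>a\<in>A. \<forall>x\<in>H. mul a x = mul x a) \<and> unit \<in> A \<and>
     \<comment> \<open>(2)\<close>
     (\<forall>b\<in>B. \<forall>x\<in>H. mul b x \<in> B \<and> mul x b \<in> B) \<and>
     (\<exists>e\<in>B. \<forall>b\<in>B. mul e b = b \<and> mul b e = b) \<and>
     \<comment> \<open>(3)\<close>
     (\<forall>x\<in>A. (\<forall>y\<in>A. form x y = 0) \<longrightarrow> x = 0) \<and>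
     (\<forall>x\<in>B. (\<forall>y\<in>B. form x y = 0) \<longrightarrow> x = 0) \<and>
     \<comment> \<open>(4)\<close>
     (\<forall>n f F m g G. basis_invgram scale form A n f F \<longrightarrow> basis_invgram scale form B m g G \<longrightarrow>
        (\<forall>b1\<in>B. \<forall>b2\<in>B. form (V_K scale mul m g G b1) b2
            = (\<Sum>i<n. \<Sum>j<n. F i j * form (f i) b1 * form (f j) b2))) \<and>
     \<comment> \<open>(5)\<close>
     star ` A = A \<and> star ` B = B \<and> (\<forall>x\<in>H. \<forall>y\<in>H. form (star x) (star y) = form x y) \<and>
     \<comment> \<open>(6)\<close>
     (\<forall>n f F. basis_invgram scale form A n f F \<longrightarrow> mul U U = K_star scale mul star n f F) \<and>
     \<comment> \<open>(7)\<close>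
     (\<forall>m g G. basis_invgram scale form B m g G \<longrightarrow>
        (\<forall>b\<in>B. form U b = form (K_star scale mul star m g G) b)) \<and>
     \<comment> \<open>(8)\<close>
     (\<forall>a\<in>A. star (mul a U) = mul a U))"

text \<open>Elements of C[G] are functions 'g => complex (supported on carrier G);
  elements of M(G) = End(C[G]) are matrices 'g => 'g => complex, where the matrix unit
  E_{g1,g2} (mapping g2 to g1) has entry 1 at row g1, column g2.\<close>

type_synonym 'g Hel = "('g \<Rightarrow> complex) \<times> ('g \<Rightarrow> 'g \<Rightarrow> complex)"

definition supp_in :: "('g, 'm) monoid_scheme \<Rightarrow> ('g \<Rightarrow> complex) \<Rightarrow> bool" where
  "supp_in G a \<longleftrightarrow> (\<forall>g. g \<notin> carrier G \<longrightarrow> a g = 0)"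

definition conv :: "('g, 'm) monoid_scheme \<Rightarrow> ('g \<Rightarrow> complex) \<Rightarrow> ('g \<Rightarrow> complex) \<Rightarrow> 'g \<Rightarrow> complex" where
  "conv G a b = (\<lambda>g. if g \<in> carrier G then (\<Sum>h\<in>carrier G. a h * b (inv\<^bsub>G\<^esub> h \<otimes>\<^bsub>G\<^esub> g)) else 0)"

definition centerA :: "('g, 'm) monoid_scheme \<Rightarrow> ('g \<Rightarrow> complex) set" where
  "centerA G = {a. supp_in G a \<and> (\<forall>x. supp_in G x \<longrightarrow> conv G a x = conv G x a)}"

definition pair_class :: "('g, 'm) monoid_scheme \<Rightarrow> 'g \<times> 'g \<Rightarrow> ('g \<times> 'g) set" where
  "pair_class G p = {(h \<otimes>\<^bsub>G\<^esub> fst p \<otimes>\<^bsub>G\<^esub> inv\<^bsub>G\<^esub> h, h \<otimes>\<^bsub>G\<^esub> snd p \<otimes>\<^bsub>G\<^esub> inv\<^bsub>G\<^esub> h) | h. h \<in> carrier G}"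

definition betas :: "('g, 'm) monoid_scheme \<Rightarrow> ('g \<times> 'g) set set" where
  "betas G = {pair_class G (s1, s2) | s1 s2. s1 \<in> carrier G \<and> s2 \<in> carrier G \<and>
                 s1 \<otimes>\<^bsub>G\<^esub> s1 = \<one>\<^bsub>G\<^esub> \<and> s2 \<otimes>\<^bsub>G\<^esub> s2 = \<one>\<^bsub>G\<^esub>}"

definition E_beta :: "('g \<times> 'g) set \<Rightarrow> 'g \<Rightarrow> 'g \<Rightarrow> complex" where
  "E_beta \<beta> = (\<lambda>x y. if (x, y) \<in> \<beta> then 1 else 0)"

definition spanB :: "('g, 'm) monoid_scheme \<Rightarrow> ('g \<Rightarrow> 'g \<Rightarrow> complex) set" where
  "spanB G = {(\<lambda>x y. \<Sum>\<beta>\<in>betas G. c \<beta> * E_beta \<beta> x y) | c. True}"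

definition mmul :: "('g, 'm) monoid_scheme \<Rightarrow> ('g \<Rightarrow> 'g \<Rightarrow> complex) \<Rightarrow> ('g \<Rightarrow> 'g \<Rightarrow> complex) \<Rightarrow> 'g \<Rightarrow> 'g \<Rightarrow> complex" where
  "mmul G b1 b2 = (\<lambda>x y. \<Sum>z\<in>carrier G. b1 x z * b2 z y)"

text \<open>V : C[G] -> M(G), linear extension of V(g)(x) = g x g^{-1}\<close>
definition Vmat :: "('g, 'm) monoid_scheme \<Rightarrow> ('g \<Rightarrow> complex) \<Rightarrow> 'g \<Rightarrow> 'g \<Rightarrow> complex" where
  "Vmat G a = (\<lambda>y x. if y \<in> carrier G \<and> x \<in> carrier G then
       (\<Sum>g\<in>carrier G. a g * (if y = g \<otimes>\<^bsub>G\<^esub> x \<otimes>\<^bsub>G\<^esub> inv\<^bsub>G\<^esub> g then 1 else 0)) else 0)"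

definition HA :: "('g, 'm) monoid_scheme \<Rightarrow> 'g Hel set" where
  "HA G = {(a, 0) | a. a \<in> centerA G}"

definition HB :: "('g, 'm) monoid_scheme \<Rightarrow> 'g Hel set" where
  "HB G = {(0, b) | b. b \<in> spanB G}"

definition scaleH :: "complex \<Rightarrow> 'g Hel \<Rightarrow> 'g Hel" where
  "scaleH c x = ((\<lambda>g. c * fst x g), (\<lambda>u v. c * snd x u v))"

definition multH :: "('g, 'm) monoid_scheme \<Rightarrow> 'g Hel \<Rightarrow> 'g Hel \<Rightarrow> 'g Hel" where
  "multH G x y = (conv G (fst x) (fst y),
      mmul G (snd x) (snd y) + mmul G (Vmat G (fst x)) (snd y) + mmul G (snd x) (Vmat G (fst y)))"

definition oneH :: "('g, 'm) monoid_scheme \<Rightarrow> 'g Hel" where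
  "oneH G = ((\<lambda>g. if g = \<one>\<^bsub>G\<^esub> then 1 else 0), 0)"

definition starH :: "('g, 'm) monoid_scheme \<Rightarrow> 'g Hel \<Rightarrow> 'g Hel" where
  "starH G x = ((\<lambda>g. if g \<in> carrier G then fst x (inv\<^bsub>G\<^esub> g) else 0), (\<lambda>u v. snd x v u))"

definition fH :: "('g, 'm) monoid_scheme \<Rightarrow> 'g Hel \<Rightarrow> complex" where
  "fH G x = (fst x \<one>\<^bsub>G\<^esub> + (\<Sum>u\<in>carrier G. snd x u u)) / of_nat (card (carrier G))"

definition formH :: "('g, 'm) monoid_scheme \<Rightarrow> 'g Hel \<Rightarrow> 'g Hel \<Rightarrow> complex" where
  "formH G x y = fH G (multH G x y)"

end

theory Submission
  imports Defs
begin

lemma sum_apply_fun: "(\<Sum>i\<in>A. f i) x = (\<Sum>i\<in>A. f i x)"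
  by (induct A rule: infinite_finite_induct) auto

lemma sum_apply_fun2: "(\<Sum>i\<in>A. f i) x y = (\<Sum>i\<in>A. f i x y)"
  by (induct A rule: infinite_finite_induct) auto

locale fgrp = group G for G :: "'g monoid" (structure) +
  assumes fin: "finite (carrier G)"
begin

abbreviation "C \<equiv> carrier G"

lemma linv_cancel[simp]: "h \<in> C \<Longrightarrow> x \<in> C \<Longrightarrow> inv h \<otimes> (h \<otimes> x) = x"
  by (simp add: m_assoc[symmetric])
lemma rinv_cancel[simp]: "h \<in> C \<Longrightarrow> x \<in> C \<Longrightarrow> h \<otimes> (inv h \<otimes> x) = x"
  by (simp add: m_assoc[symmetric])
lemma lcancel_iff[simp]: "h \<in> C \<Longrightarrow> x \<in> C \<Longrightarrow> y \<in> C \<Longrightarrow> (h \<otimes> x = h \<otimes> y) = (x = y)"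
  by (metis linv_cancel)
lemma rcancel_iff[simp]: "h \<in> C \<Longrightarrow> x \<in> C \<Longrightarrow> y \<in> C \<Longrightarrow> (x \<otimes> h = y \<otimes> h) = (x = y)"
  by (metis m_assoc r_inv r_one inv_closed)
definition cj :: "'g \<Rightarrow> 'g \<Rightarrow> 'g" where "cj h x = h \<otimes> x \<otimes> inv h"

lemma cj_closed[simp,intro]: "h \<in> C \<Longrightarrow> x \<in> C \<Longrightarrow> cj h x \<in> C"
  by (simp add: cj_def)

lemma cj_cj: "h \<in> C \<Longrightarrow> k \<in> C \<Longrightarrow> x \<in> C \<Longrightarrow> cj h (cj k x) = cj (h \<otimes> k) x"
  by (simp add: cj_def m_assoc inv_mult_group)

lemma cj_one[simp]: "x \<in> C \<Longrightarrow> cj \<one> x = x"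
  by (simp add: cj_def)

lemma cj_inv_cancel[simp]: "h \<in> C \<Longrightarrow> x \<in> C \<Longrightarrow> cj (inv h) (cj h x) = x"
  by (simp add: cj_def m_assoc)

lemma cj_inv_cancel2[simp]: "h \<in> C \<Longrightarrow> x \<in> C \<Longrightarrow> cj h (cj (inv h) x) = x"
  by (simp add: cj_def m_assoc)

lemma cj_mult: "h \<in> C \<Longrightarrow> x \<in> C \<Longrightarrow> y \<in> C \<Longrightarrow> cj h (x \<otimes> y) = cj h x \<otimes> cj h y"
  by (simp add: cj_def m_assoc)

lemma cj_inv: "h \<in> C \<Longrightarrow> x \<in> C \<Longrightarrow> inv (cj h x) = cj h (inv x)"
  by (simp add: cj_def m_assoc inv_mult_group)

lemma cj_oneE[simp]: "h \<in> C \<Longrightarrow> cj h \<one> = \<one>"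
  by (simp add: cj_def)

lemma cj_eq_iff: "g \<in> C \<Longrightarrow> y \<in> C \<Longrightarrow> z \<in> C \<Longrightarrow> (y = cj g z) = (z = cj (inv g) y)"
  by (metis cj_inv_cancel cj_inv_cancel2 inv_closed)

lemma cj_inj: "h \<in> C \<Longrightarrow> x \<in> C \<Longrightarrow> y \<in> C \<Longrightarrow> (cj h x = cj h y) = (x = y)"
  by (metis cj_inv_cancel)

lemma bij_cj: "h \<in> C \<Longrightarrow> bij_betw (cj h) C C"
  by (rule bij_betw_byWitness[where f'="cj (inv h)"]) auto

lemma bij_lmult: "h \<in> C \<Longrightarrow> bij_betw (\<lambda>x. h \<otimes> x) C C"
  by (rule bij_betw_byWitness[where f'="\<lambda>x. inv h \<otimes> x"]) (auto simp: m_assoc[symmetric])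

lemma bij_rmult: "h \<in> C \<Longrightarrow> bij_betw (\<lambda>x. x \<otimes> h) C C"
  by (rule bij_betw_byWitness[where f'="\<lambda>x. x \<otimes> inv h"]) (auto simp: m_assoc)

lemma bij_inv: "bij_betw (\<lambda>x. inv x) C C"
  by (rule bij_betw_byWitness[where f'="\<lambda>x. inv x"]) auto

lemma sum_cj: "h \<in> C \<Longrightarrow> (\<Sum>x\<in>C. f (cj h x)) = (\<Sum>x\<in>C. f x)"
  using sum.reindex_bij_betw[OF bij_cj] by blast
lemma sum_lmult: "h \<in> C \<Longrightarrow> (\<Sum>x\<in>C. f (h \<otimes> x)) = (\<Sum>x\<in>C. f x)"
  using sum.reindex_bij_betw[OF bij_lmult] by blast
lemma sum_rmult: "h \<in> C \<Longrightarrow> (\<Sum>x\<in>C. f (x \<otimes> h)) = (\<Sum>x\<in>C. f x)"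
  using sum.reindex_bij_betw[OF bij_rmult] by blast
lemma sum_inv: "(\<Sum>x\<in>C. f (inv x)) = (\<Sum>x\<in>C. f x)"
  using sum.reindex_bij_betw[OF bij_inv] by blast

lemma delta_sum: "a \<in> C \<Longrightarrow> (\<Sum>x\<in>C. if x = a then f x else 0) = f a"
  using fin by simp

lemma delta_sum': "a \<in> C \<Longrightarrow> (\<Sum>x\<in>C. if a = x then f x else 0) = f a"
  using fin by simp

end

context fgrp begin

definition classf :: "('g \<Rightarrow> complex) \<Rightarrow> bool" where
  "classf a \<longleftrightarrow> supp_in G a \<and> (\<forall>h\<in>C. \<forall>x\<in>C. a (cj h x) = a x)"

definition Xs :: "'g set" where "Xs = {x \<in> C. x \<otimes> x = \<one>}"

definition invm :: "('g \<Rightarrow> 'g \<Rightarrow> complex) \<Rightarrow> bool" where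
  "invm b \<longleftrightarrow> (\<forall>u v. u \<notin> Xs \<or> v \<notin> Xs \<longrightarrow> b u v = 0) \<and>
     (\<forall>h\<in>C. \<forall>u\<in>C. \<forall>v\<in>C. b (cj h u) (cj h v) = b u v)"

definition delta :: "'g \<Rightarrow> 'g \<Rightarrow> complex" where "delta g = (\<lambda>z. if z = g then 1 else 0)"

definition sta :: "('g \<Rightarrow> complex) \<Rightarrow> 'g \<Rightarrow> complex" where
  "sta a = (\<lambda>g. if g \<in> C then a (inv g) else 0)"

definition tr :: "('g \<Rightarrow> 'g \<Rightarrow> complex) \<Rightarrow> complex" where
  "tr b = (\<Sum>u\<in>C. b u u)"

definition idC :: "'g \<Rightarrow> 'g \<Rightarrow> complex" where
  "idC = (\<lambda>y x. if y \<in> C \<and> x \<in> C then (if y = x then 1 else 0) else 0)"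

lemma Xs_sub: "Xs \<subseteq> C" by (auto simp: Xs_def)

lemma Xs_cj: "h \<in> C \<Longrightarrow> x \<in> C \<Longrightarrow> (cj h x \<in> Xs) = (x \<in> Xs)"
  proof -
  assume h: "h \<in> C" and x: "x \<in> C"
  have "cj h x \<otimes> cj h x = cj h (x \<otimes> x)" using h x by (simp add: cj_mult)
  moreover have "(cj h (x \<otimes> x) = \<one>) = (x \<otimes> x = \<one>)"
    using h x cj_inj[of h "x \<otimes> x" \<one>] by simp
  ultimately show ?thesis using h x by (simp add: Xs_def)
qed

lemma conv_in: "z \<in> C \<Longrightarrow> conv G a b z = (\<Sum>h\<in>C. a h * b (inv h \<otimes> z))"
  by (simp add: conv_def)
lemma conv_out: "z \<notin> C \<Longrightarrow> conv G a b z = 0"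
  by (simp add: conv_def)

lemma supp_conv: "supp_in G (conv G a b)"
  by (simp add: supp_in_def conv_def)

lemma conv_add_left: "conv G (a1 + a2) b = conv G a1 b + conv G a2 b"
  by (auto simp: fun_eq_iff conv_def distrib_right sum.distrib)
lemma conv_add_right: "conv G a (b1 + b2) = conv G a b1 + conv G a b2"
  by (auto simp: fun_eq_iff conv_def distrib_left sum.distrib)
lemma conv_scale_left: "conv G (\<lambda>g. c * a g) b = (\<lambda>g. c * conv G a b g)"
  by (auto simp: fun_eq_iff conv_def sum_distrib_left mult.assoc)
lemma conv_scale_right: "conv G a (\<lambda>g. c * b g) = (\<lambda>g. c * conv G a b g)"
  by (auto simp: fun_eq_iff conv_def sum_distrib_left mult.left_commute)
lemma conv_zero_left[simp]: "conv G 0 b = 0"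
  by (auto simp: fun_eq_iff conv_def)
lemma conv_zero_right[simp]: "conv G a 0 = 0"
  by (auto simp: fun_eq_iff conv_def)

lemma conv_assoc: "conv G (conv G a b) c = conv G a (conv G b c)"
proof (rule ext)
  fix z show "conv G (conv G a b) c z = conv G a (conv G b c) z"
  proof (cases "z \<in> C")
    case True
    have "conv G (conv G a b) c z = (\<Sum>h\<in>C. (\<Sum>k\<in>C. a k * b (inv k \<otimes> h)) * c (inv h \<otimes> z))"
      using True by (simp add: conv_in)
    also have "\<dots> = (\<Sum>h\<in>C. \<Sum>k\<in>C. a k * b (inv k \<otimes> h) * c (inv h \<otimes> z))"
      by (simp add: sum_distrib_right)
    also have "\<dots> = (\<Sum>k\<in>C. \<Sum>h\<in>C. a k * b (inv k \<otimes> h) * c (inv h \<otimes> z))"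
      by (rule sum.swap)
    also have "\<dots> = (\<Sum>k\<in>C. a k * (\<Sum>h\<in>C. b (inv k \<otimes> h) * c (inv h \<otimes> z)))"
      by (simp add: sum_distrib_left mult.assoc)
    also have "\<dots> = (\<Sum>k\<in>C. a k * (\<Sum>m\<in>C. b m * c (inv m \<otimes> (inv k \<otimes> z))))"
    proof (rule sum.cong[OF refl])
      fix k assume k: "k \<in> C"
      have "(\<Sum>h\<in>C. b (inv k \<otimes> h) * c (inv h \<otimes> z)) = (\<Sum>m\<in>C. b (inv k \<otimes> (k \<otimes> m)) * c (inv (k \<otimes> m) \<otimes> z))"
        using sum_lmult[OF k, of "\<lambda>h. b (inv k \<otimes> h) * c (inv h \<otimes> z)"] by simp
      also have "\<dots> = (\<Sum>m\<in>C. b m * c (inv m \<otimes> (inv k \<otimes> z)))"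
        using k True by (intro sum.cong) (auto simp: inv_mult_group m_assoc)
      finally show "a k * (\<Sum>h\<in>C. b (inv k \<otimes> h) * c (inv h \<otimes> z)) = a k * (\<Sum>m\<in>C. b m * c (inv m \<otimes> (inv k \<otimes> z)))"
        by simp
    qed
    also have "\<dots> = conv G a (conv G b c) z"
      using True by (simp add: conv_in)
    finally show ?thesis .
  qed (simp add: conv_out)
qed

lemma inv_mult_one_iff: "h \<in> C \<Longrightarrow> z \<in> C \<Longrightarrow> (inv h \<otimes> z = \<one>) = (h = z)"
  by (metis l_inv r_one rinv_cancel one_closed)

lemma conv_delta_left: assumes s: "supp_in G a" shows "conv G (delta \<one>) a = a"
proof (rule ext)
  fix z
  show "conv G (delta \<one>) a z = a z"
  proof (cases "z \<in> C")
    case True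
    have "conv G (delta \<one>) a z = (\<Sum>h\<in>C. if h = \<one> then a (inv h \<otimes> z) else 0)"
      using True by (auto simp: conv_in delta_def intro!: sum.cong)
    then show ?thesis using True by (simp add: delta_sum)
  qed (use s in \<open>simp add: conv_out supp_in_def\<close>)
qed

lemma conv_delta_right: assumes s: "supp_in G a" shows "conv G a (delta \<one>) = a"
proof (rule ext)
  fix z
  show "conv G a (delta \<one>) z = a z"
  proof (cases "z \<in> C")
    case True
    have "conv G a (delta \<one>) z = (\<Sum>h\<in>C. if h = z then a h else 0)"
      unfolding conv_in[OF True] using True by (intro sum.cong) (auto simp: delta_def inv_mult_one_iff)
    then show ?thesis using True by (simp add: delta_sum)
  qed (use s in \<open>simp add: conv_out supp_in_def\<close>)
qed

lemma sum_zinv: "z \<in> C \<Longrightarrow> (\<Sum>m\<in>C. f (z \<otimes> inv m)) = (\<Sum>m\<in>C. f m)"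
  using sum_inv[of "\<lambda>m. f (z \<otimes> m)"] sum_lmult[of z f] by simp

lemma classf_comm: assumes "classf a" shows "conv G a x = conv G x a"
proof (rule ext)
  fix z show "conv G a x z = conv G x a z"
  proof (cases "z \<in> C")
    case True
    have "conv G a x z = (\<Sum>m\<in>C. a (z \<otimes> inv m) * x (inv (z \<otimes> inv m) \<otimes> z))"
      using True sum_zinv[OF True, of "\<lambda>h. a h * x (inv h \<otimes> z)"] by (simp add: conv_in)
    also have "\<dots> = (\<Sum>m\<in>C. x m * a (inv m \<otimes> z))"
    proof (rule sum.cong[OF refl])
      fix m assume m: "m \<in> C"
      have i: "inv (z \<otimes> inv m) = m \<otimes> inv z" using m True by (simp add: inv_mult_group)
      have "inv (z \<otimes> inv m) \<otimes> z = m" unfolding i using m True by (simp add: m_assoc)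
      moreover have "a (z \<otimes> inv m) = a (inv m \<otimes> z)"
      proof -
        have "cj (inv m) (z \<otimes> inv m) = inv m \<otimes> z"
          using m True by (simp add: cj_def m_assoc)
        moreover have "a (cj (inv m) (z \<otimes> inv m)) = a (z \<otimes> inv m)"
          using assms m True unfolding classf_def by simp
        ultimately show ?thesis by simp
      qed
      ultimately show "a (z \<otimes> inv m) * x (inv (z \<otimes> inv m) \<otimes> z) = x m * a (inv m \<otimes> z)" by simp
    qed
    finally show ?thesis using True by (simp add: conv_in)
  qed (simp add: conv_out)
qed

lemma classf_conv: assumes "classf a" "classf b" shows "classf (conv G a b)"
  unfolding classf_def
proof (intro conjI ballI)
  show "supp_in G (conv G a b)" by (rule supp_conv)
  fix h x assume h: "h \<in> C" and x: "x \<in> C"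
  have "conv G a b (cj h x) = (\<Sum>m\<in>C. a (cj h m) * b (inv (cj h m) \<otimes> cj h x))"
    using sum_cj[OF h, of "\<lambda>m. a m * b (inv m \<otimes> cj h x)"] h x by (simp add: conv_in)
  also have "\<dots> = (\<Sum>m\<in>C. a m * b (inv m \<otimes> x))"
  proof (rule sum.cong[OF refl])
    fix m assume m: "m \<in> C"
    have e: "inv (cj h m) \<otimes> cj h x = cj h (inv m \<otimes> x)" using h m x by (simp add: cj_inv cj_mult)
    have "a (cj h m) = a m" "b (cj h (inv m \<otimes> x)) = b (inv m \<otimes> x)"
      using assms h x m unfolding classf_def by auto
    then show "a (cj h m) * b (inv (cj h m) \<otimes> cj h x) = a m * b (inv m \<otimes> x)" by (simp add: e)
  qed
  finally show "conv G a b (cj h x) = conv G a b x" using x by (simp add: conv_in)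
qed

end

context fgrp begin

lemma inv_eq_iff: "k \<in> C \<Longrightarrow> z \<in> C \<Longrightarrow> h \<in> C \<Longrightarrow> (inv k \<otimes> z = h) = (k = z \<otimes> inv h)"
proof
  assume k: "k \<in> C" and z: "z \<in> C" and h: "h \<in> C"
  { assume e: "inv k \<otimes> z = h"
    have "z = k \<otimes> h" using e k z by (metis rinv_cancel)
    then show "k = z \<otimes> inv h" using k h by (simp add: m_assoc) }
  { assume e: "k = z \<otimes> inv h"
    have "inv k = h \<otimes> inv z" using e z h by (simp add: inv_mult_group)
    then show "inv k \<otimes> z = h" using z h by (simp add: m_assoc) }
qed

lemma conv_delta_r_gen: "z \<in> C \<Longrightarrow> h \<in> C \<Longrightarrow> conv G a (delta h) z = a (z \<otimes> inv h)"
proof -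
  assume z: "z \<in> C" and h: "h \<in> C"
  have "conv G a (delta h) z = (\<Sum>k\<in>C. if k = z \<otimes> inv h then a k else 0)"
    unfolding conv_in[OF z] using z h by (intro sum.cong) (auto simp: delta_def inv_eq_iff)
  then show ?thesis using z h by (simp add: delta_sum)
qed

lemma conv_delta_l_gen: "z \<in> C \<Longrightarrow> h \<in> C \<Longrightarrow> conv G (delta h) a z = a (inv h \<otimes> z)"
proof -
  assume z: "z \<in> C" and h: "h \<in> C"
  have "conv G (delta h) a z = (\<Sum>k\<in>C. if k = h then a (inv k \<otimes> z) else 0)"
    unfolding conv_in[OF z] using z h by (intro sum.cong) (auto simp: delta_def)
  then show ?thesis using z h by (simp add: delta_sum)
qed

lemma centerA_eq: "centerA G = {a. classf a}"
proof safe
  fix a assume "classf a" then show "a \<in> centerA G"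
    unfolding centerA_def using classf_comm by (auto simp: classf_def)
next
  fix a assume a: "a \<in> centerA G"
  have s: "supp_in G a" using a by (simp add: centerA_def)
  show "classf a" unfolding classf_def
  proof (intro conjI s ballI)
    fix h x assume h: "h \<in> C" and x: "x \<in> C"
    have sd: "supp_in G (delta h)" using h by (auto simp: supp_in_def delta_def)
    have "conv G a (delta h) (h \<otimes> x) = conv G (delta h) a (h \<otimes> x)"
      using a sd by (simp add: centerA_def)
    then have "a (h \<otimes> x \<otimes> inv h) = a (inv h \<otimes> (h \<otimes> x))"
      using h x by (simp add: conv_delta_r_gen conv_delta_l_gen)
    then show "a (cj h x) = a x" using h x by (simp add: cj_def)
  qed
qed

lemma cj_cj_conj: "h \<in> C \<Longrightarrow> k \<in> C \<Longrightarrow> u \<in> C \<Longrightarrow> cj (cj h k) (cj h u) = cj h (cj k u)"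
proof -
  assume h: "h \<in> C" and k: "k \<in> C" and u: "u \<in> C"
  have "cj h k \<otimes> h = h \<otimes> k" using h k by (simp add: cj_def m_assoc)
  then show ?thesis using h k u by (simp add: cj_cj)
qed

subsection \<open>Matrices\<close>

lemma mmul_assoc: "mmul G (mmul G b1 b2) b3 = mmul G b1 (mmul G b2 b3)"
proof (intro ext)
  fix x y
  have "mmul G (mmul G b1 b2) b3 x y = (\<Sum>z\<in>C. \<Sum>w\<in>C. b1 x w * b2 w z * b3 z y)"
    by (simp add: mmul_def sum_distrib_right)
  also have "\<dots> = (\<Sum>w\<in>C. \<Sum>z\<in>C. b1 x w * b2 w z * b3 z y)" by (rule sum.swap)
  also have "\<dots> = mmul G b1 (mmul G b2 b3) x y"
    by (simp add: mmul_def sum_distrib_left mult.assoc)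
  finally show "mmul G (mmul G b1 b2) b3 x y = mmul G b1 (mmul G b2 b3) x y" .
qed

lemma mmul_add_left: "mmul G (b1 + b2) b = mmul G b1 b + mmul G b2 b"
  by (simp add: fun_eq_iff mmul_def distrib_right sum.distrib)
lemma mmul_add_right: "mmul G b (b1 + b2) = mmul G b b1 + mmul G b b2"
  by (simp add: fun_eq_iff mmul_def distrib_left sum.distrib)
lemma mmul_scale_left: "mmul G (\<lambda>u v. c * b1 u v) b = (\<lambda>u v. c * mmul G b1 b u v)"
  by (simp add: fun_eq_iff mmul_def sum_distrib_left mult.assoc)
lemma mmul_scale_right: "mmul G b (\<lambda>u v. c * b1 u v) = (\<lambda>u v. c * mmul G b b1 u v)"
  by (simp add: fun_eq_iff mmul_def sum_distrib_left mult.left_commute)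
lemma mmul_zero_left[simp]: "mmul G 0 b = 0"
  by (simp add: fun_eq_iff mmul_def)
lemma mmul_zero_right[simp]: "mmul G b 0 = 0"
  by (simp add: fun_eq_iff mmul_def)

lemma mmul_T: "(\<lambda>u v. mmul G b1 b2 v u) = mmul G (\<lambda>u v. b2 v u) (\<lambda>u v. b1 v u)"
  by (simp add: fun_eq_iff mmul_def mult.commute)

lemma tr_mmul_comm: "tr (mmul G b1 b2) = tr (mmul G b2 b1)"
proof -
  have "tr (mmul G b1 b2) = (\<Sum>u\<in>C. \<Sum>z\<in>C. b1 u z * b2 z u)" by (simp add: tr_def mmul_def)
  also have "\<dots> = (\<Sum>z\<in>C. \<Sum>u\<in>C. b1 u z * b2 z u)" by (rule sum.swap)
  also have "\<dots> = tr (mmul G b2 b1)" by (simp add: tr_def mmul_def mult.commute)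
  finally show ?thesis .
qed

lemma tr_add: "tr (b1 + b2) = tr b1 + tr b2" by (simp add: tr_def sum.distrib)
lemma tr_T: "tr (\<lambda>u v. b v u) = tr b" by (simp add: tr_def)

lemma Vmat_in: "y \<in> C \<Longrightarrow> x \<in> C \<Longrightarrow> Vmat G a y x = (\<Sum>g\<in>C. a g * (if y = cj g x then 1 else 0))"
  by (simp add: Vmat_def cj_def)
lemma Vmat_out: "y \<notin> C \<or> x \<notin> C \<Longrightarrow> Vmat G a y x = 0"
  by (auto simp: Vmat_def)

lemma Vmat_add: "Vmat G (a1 + a2) = Vmat G a1 + Vmat G a2"
  by (simp add: fun_eq_iff Vmat_def distrib_right sum.distrib)
lemma Vmat_scale: "Vmat G (\<lambda>g. c * a g) = (\<lambda>u v. c * Vmat G a u v)"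
  by (simp add: fun_eq_iff Vmat_def sum_distrib_left mult.assoc)
lemma Vmat_zero[simp]: "Vmat G 0 = 0"
  by (simp add: fun_eq_iff Vmat_def)

lemma VB_left: "y \<in> C \<Longrightarrow> mmul G (Vmat G a) b y x = (\<Sum>g\<in>C. a g * b (cj (inv g) y) x)"
proof -
  assume y: "y \<in> C"
  have "mmul G (Vmat G a) b y x = (\<Sum>z\<in>C. \<Sum>g\<in>C. a g * ((if y = cj g z then 1 else 0) * b z x))"
    using y by (simp add: mmul_def Vmat_in sum_distrib_right mult.assoc)
  also have "\<dots> = (\<Sum>g\<in>C. \<Sum>z\<in>C. a g * ((if y = cj g z then 1 else 0) * b z x))" by (rule sum.swap)
  also have "\<dots> = (\<Sum>g\<in>C. a g * b (cj (inv g) y) x)"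
  proof (rule sum.cong[OF refl])
    fix g assume g: "g \<in> C"
    have "(\<Sum>z\<in>C. a g * ((if y = cj g z then 1 else 0) * b z x)) = (\<Sum>z\<in>C. if z = cj (inv g) y then a g * b z x else 0)"
      using g y by (intro sum.cong refl) (simp add: cj_eq_iff[of g y])
    also have "\<dots> = a g * b (cj (inv g) y) x" using g y by (simp add: delta_sum)
    finally show "(\<Sum>z\<in>C. a g * ((if y = cj g z then 1 else 0) * b z x)) = a g * b (cj (inv g) y) x" .
  qed
  finally show ?thesis .
qed

lemma VB_left_out: "y \<notin> C \<Longrightarrow> mmul G (Vmat G a) b y x = 0"
  by (simp add: mmul_def Vmat_out)

lemma VB_right: "x \<in> C \<Longrightarrow> mmul G b (Vmat G a) y x = (\<Sum>g\<in>C. a g * b y (cj g x))"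
proof -
  assume x: "x \<in> C"
  have "mmul G b (Vmat G a) y x = (\<Sum>z\<in>C. \<Sum>g\<in>C. a g * ((if z = cj g x then 1 else 0) * b y z))"
    using x by (simp add: mmul_def Vmat_in sum_distrib_left mult.commute mult.left_commute)
  also have "\<dots> = (\<Sum>g\<in>C. \<Sum>z\<in>C. a g * ((if z = cj g x then 1 else 0) * b y z))" by (rule sum.swap)
  also have "\<dots> = (\<Sum>g\<in>C. a g * b y (cj g x))"
  proof (rule sum.cong[OF refl])
    fix g assume g: "g \<in> C"
    have "(\<Sum>z\<in>C. a g * ((if z = cj g x then 1 else 0) * b y z)) = (\<Sum>z\<in>C. if z = cj g x then a g * b y z else 0)"
      by (intro sum.cong) auto
    also have "\<dots> = a g * b y (cj g x)" using g x by (simp add: delta_sum)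
    finally show "(\<Sum>z\<in>C. a g * ((if z = cj g x then 1 else 0) * b y z)) = a g * b y (cj g x)" .
  qed
  finally show ?thesis .
qed

lemma VB_right_out: "x \<notin> C \<Longrightarrow> mmul G b (Vmat G a) y x = 0"
  by (simp add: mmul_def Vmat_out)

end

context fgrp begin

lemma Vmat_conv: "Vmat G (conv G a b) = mmul G (Vmat G a) (Vmat G b)"
proof (intro ext)
  fix y x
  show "Vmat G (conv G a b) y x = mmul G (Vmat G a) (Vmat G b) y x"
  proof (cases "y \<in> C \<and> x \<in> C")
    case True
    then have y: "y \<in> C" and x: "x \<in> C" by auto
    have "Vmat G (conv G a b) y x = (\<Sum>m\<in>C. (\<Sum>g\<in>C. a g * b (inv g \<otimes> m)) * (if y = cj m x then 1 else 0))"
      using y x by (simp add: Vmat_in conv_in)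
    also have "\<dots> = (\<Sum>m\<in>C. \<Sum>g\<in>C. a g * (b (inv g \<otimes> m) * (if y = cj m x then 1 else 0)))"
      by (simp add: sum_distrib_right mult.assoc)
    also have "\<dots> = (\<Sum>g\<in>C. \<Sum>m\<in>C. a g * (b (inv g \<otimes> m) * (if y = cj m x then 1 else 0)))"
      by (rule sum.swap)
    also have "\<dots> = (\<Sum>g\<in>C. a g * (\<Sum>k\<in>C. b k * (if y = cj (g \<otimes> k) x then 1 else 0)))"
    proof (rule sum.cong[OF refl])
      fix g assume g: "g \<in> C"
      have "(\<Sum>m\<in>C. b (inv g \<otimes> m) * (if y = cj m x then 1 else 0))
          = (\<Sum>k\<in>C. b (inv g \<otimes> (g \<otimes> k)) * (if y = cj (g \<otimes> k) x then 1 else 0))"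
        using sum_lmult[OF g, of "\<lambda>m. b (inv g \<otimes> m) * (if y = cj m x then 1 else 0)"] by simp
      also have "\<dots> = (\<Sum>k\<in>C. b k * (if y = cj (g \<otimes> k) x then 1 else 0))"
        using g by (intro sum.cong refl) simp
      finally have eq: "(\<Sum>m\<in>C. b (inv g \<otimes> m) * (if y = cj m x then 1 else 0))
          = (\<Sum>k\<in>C. b k * (if y = cj (g \<otimes> k) x then 1 else 0))" .
      show "(\<Sum>m\<in>C. a g * (b (inv g \<otimes> m) * (if y = cj m x then 1 else 0))) =
         a g * (\<Sum>k\<in>C. b k * (if y = cj (g \<otimes> k) x then 1 else 0))"
        by (simp only: sum_distrib_left[symmetric] eq)
    qed
    also have "\<dots> = (\<Sum>g\<in>C. a g * Vmat G b (cj (inv g) y) x)"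
    proof (rule sum.cong[OF refl])
      fix g assume g: "g \<in> C"
      have "(\<Sum>k\<in>C. b k * (if y = cj (g \<otimes> k) x then 1 else 0)) = (\<Sum>k\<in>C. b k * (if cj (inv g) y = cj k x then 1 else 0))"
      proof (intro sum.cong refl)
        fix k assume k: "k \<in> C"
        have "(y = cj (g \<otimes> k) x) = (cj (inv g) y = cj k x)"
          using g k x y by (metis cj_cj cj_inv_cancel cj_inv_cancel2 cj_closed)
        then show "b k * (if y = cj (g \<otimes> k) x then 1 else 0) = b k * (if cj (inv g) y = cj k x then 1 else 0)"
          by simp
      qed
      then show "a g * (\<Sum>k\<in>C. b k * (if y = cj (g \<otimes> k) x then 1 else 0)) = a g * Vmat G b (cj (inv g) y) x"
        using g x y by (simp add: Vmat_in)
    qed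
    also have "\<dots> = mmul G (Vmat G a) (Vmat G b) y x" using y by (simp add: VB_left)
    finally show ?thesis .
  next
    case False
    show ?thesis
    proof (cases "y \<in> C")
      case True
      then have "x \<notin> C" using False by auto
      then show ?thesis by (simp add: Vmat_out mmul_def)
    next
      case False
      then show ?thesis by (simp add: Vmat_out VB_left_out)
    qed
  qed
qed

lemma Vmat_delta1: "Vmat G (delta \<one>) = idC"
proof (intro ext)
  fix y x
  show "Vmat G (delta \<one>) y x = idC y x"
  proof (cases "y \<in> C \<and> x \<in> C")
    case True
    have "Vmat G (delta \<one>) y x = (\<Sum>g\<in>C. if g = \<one> then (if y = cj g x then 1 else 0) else 0)"
      using True by (simp add: Vmat_in delta_def) (intro sum.cong refl, simp)
    also have "\<dots> = (if y = x then 1 else 0)" using True by (simp add: delta_sum)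
    finally show ?thesis using True by (simp add: idC_def)
  qed (auto simp: Vmat_out idC_def)
qed

lemma mmul_idC_left: "(\<And>y x. y \<notin> C \<Longrightarrow> b y x = 0) \<Longrightarrow> mmul G idC b = b"
proof (intro ext)
  fix y x assume b: "\<And>y x. y \<notin> C \<Longrightarrow> b y x = 0"
  show "mmul G idC b y x = b y x"
  proof (cases "y \<in> C")
    case True
    have "mmul G idC b y x = (\<Sum>z\<in>C. if z = y then b z x else 0)"
      using True by (auto simp: mmul_def idC_def intro!: sum.cong)
    then show ?thesis using True by (simp add: delta_sum)
  qed (auto simp: mmul_def idC_def b)
qed

lemma mmul_idC_right: "(\<And>y x. x \<notin> C \<Longrightarrow> b y x = 0) \<Longrightarrow> mmul G b idC = b"
proof (intro ext)
  fix y x assume b: "\<And>y x. x \<notin> C \<Longrightarrow> b y x = 0"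
  show "mmul G b idC y x = b y x"
  proof (cases "x \<in> C")
    case True
    have "mmul G b idC y x = (\<Sum>z\<in>C. if z = x then b y z else 0)"
      using True by (auto simp: mmul_def idC_def intro!: sum.cong)
    then show ?thesis using True by (simp add: delta_sum)
  qed (auto simp: mmul_def idC_def b)
qed

lemma Vmat_sta: "Vmat G (sta a) y x = Vmat G a x y"
proof (cases "y \<in> C \<and> x \<in> C")
  case True
  then have y: "y \<in> C" and x: "x \<in> C" by auto
  have "Vmat G (sta a) y x = (\<Sum>g\<in>C. a (inv g) * (if y = cj g x then 1 else 0))"
    using y x by (simp add: Vmat_in sta_def)
  also have "\<dots> = (\<Sum>g\<in>C. a (inv (inv g)) * (if y = cj (inv g) x then 1 else 0))"
    using sum_inv[of "\<lambda>g. a (inv g) * (if y = cj g x then 1 else 0)"] by simp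
  also have "\<dots> = (\<Sum>g\<in>C. a g * (if x = cj g y then 1 else 0))"
  proof (intro sum.cong refl)
    fix g assume g: "g \<in> C"
    have "(y = cj (inv g) x) = (x = cj g y)" using g x y by (metis cj_inv_cancel cj_inv_cancel2)
    then show "a (inv (inv g)) * (if y = cj (inv g) x then 1 else 0) = a g * (if x = cj g y then 1 else 0)"
      using g by simp
  qed
  also have "\<dots> = Vmat G a x y" using x y by (simp add: Vmat_in)
  finally show ?thesis .
qed (auto simp: Vmat_out)

subsection \<open>Invariant matrices\<close>

lemma invm_supp: "invm b \<Longrightarrow> u \<notin> Xs \<or> v \<notin> Xs \<Longrightarrow> b u v = 0"
  by (simp add: invm_def)
lemma invm_supp_C: "invm b \<Longrightarrow> u \<notin> C \<or> v \<notin> C \<Longrightarrow> b u v = 0"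
  using Xs_sub by (auto simp: invm_def)
lemma invm_inv: "invm b \<Longrightarrow> h \<in> C \<Longrightarrow> u \<in> C \<Longrightarrow> v \<in> C \<Longrightarrow> b (cj h u) (cj h v) = b u v"
  by (simp add: invm_def)

lemma invmI:
  assumes "\<And>u v. u \<notin> Xs \<or> v \<notin> Xs \<Longrightarrow> b u v = 0"
      and "\<And>h u v. h \<in> C \<Longrightarrow> u \<in> C \<Longrightarrow> v \<in> C \<Longrightarrow> b (cj h u) (cj h v) = b u v"
  shows "invm b"
  using assms by (simp add: invm_def)

lemma invm_zero: "invm 0" by (simp add: invm_def)
lemma invm_add: "invm b1 \<Longrightarrow> invm b2 \<Longrightarrow> invm (b1 + b2)" by (simp add: invm_def)
lemma invm_scale: "invm b \<Longrightarrow> invm (\<lambda>u v. c * b u v)" by (simp add: invm_def)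
lemma invm_T: "invm b \<Longrightarrow> invm (\<lambda>u v. b v u)" by (auto simp: invm_def)

lemma invm_mmul: assumes b1: "invm b1" and b2: "invm b2" shows "invm (mmul G b1 b2)"
proof (rule invmI)
  fix u v assume "u \<notin> Xs \<or> v \<notin> Xs"
  then show "mmul G b1 b2 u v = 0"
    using invm_supp[OF b1] invm_supp[OF b2] by (auto simp: mmul_def)
next
  fix h u v assume h: "h \<in> C" and u: "u \<in> C" and v: "v \<in> C"
  have "mmul G b1 b2 (cj h u) (cj h v) = (\<Sum>z\<in>C. b1 (cj h u) (cj h z) * b2 (cj h z) (cj h v))"
    using sum_cj[OF h, of "\<lambda>z. b1 (cj h u) z * b2 z (cj h v)"] by (simp add: mmul_def)
  also have "\<dots> = mmul G b1 b2 u v"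
    using h u v invm_inv[OF b1] invm_inv[OF b2] by (simp add: mmul_def)
  finally show "mmul G b1 b2 (cj h u) (cj h v) = mmul G b1 b2 u v" .
qed

lemma invm_comm: assumes b: "invm b" shows "mmul G (Vmat G a) b = mmul G b (Vmat G a)"
proof (intro ext)
  fix y x
  show "mmul G (Vmat G a) b y x = mmul G b (Vmat G a) y x"
  proof (cases "y \<in> C \<and> x \<in> C")
    case True
    then have y: "y \<in> C" and x: "x \<in> C" by auto
    have "mmul G (Vmat G a) b y x = (\<Sum>g\<in>C. a g * b (cj (inv g) y) x)" using y by (simp add: VB_left)
    also have "\<dots> = (\<Sum>g\<in>C. a g * b y (cj g x))"
    proof (intro sum.cong refl)
      fix g assume g: "g \<in> C"
      have "b (cj g (cj (inv g) y)) (cj g x) = b (cj (inv g) y) x"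
        using invm_inv[OF b g, of "cj (inv g) y" x] g x y by simp
      then show "a g * b (cj (inv g) y) x = a g * b y (cj g x)" using g y by simp
    qed
    also have "\<dots> = mmul G b (Vmat G a) y x" using x by (simp add: VB_right)
    finally show ?thesis .
  next
    case False
    show ?thesis
    proof (cases "y \<notin> C")
      case True
      then have yn: "y \<notin> C" .
      show ?thesis
      proof (cases "x \<in> C")
        case True then show ?thesis using yn invm_supp_C[OF b] by (simp add: VB_left_out VB_right)
      qed (simp add: VB_left_out VB_right_out yn)
    next
      case False
      then have xn: "x \<notin> C" using \<open>\<not> (y \<in> C \<and> x \<in> C)\<close> by auto
      show ?thesis
      proof (cases "y \<in> C")
        case True then show ?thesis using xn invm_supp_C[OF b] by (simp add: VB_left VB_right_out)
      qed (simp add: VB_left_out VB_right_out xn)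
    qed
  qed
qed

lemma invm_VB: assumes a: "classf a" and b: "invm b" shows "invm (mmul G (Vmat G a) b)"
proof (rule invmI)
  fix u v assume uv: "u \<notin> Xs \<or> v \<notin> Xs"
  show "mmul G (Vmat G a) b u v = 0"
  proof (cases "u \<in> C")
    case True
    have "\<And>g. g \<in> C \<Longrightarrow> b (cj (inv g) u) v = 0"
    proof -
      fix g assume g: "g \<in> C"
      have "cj (inv g) u \<notin> Xs \<or> v \<notin> Xs" using uv Xs_cj[of "inv g" u] g True by auto
      then show "b (cj (inv g) u) v = 0" using invm_supp[OF b] by blast
    qed
    then show ?thesis using True by (simp add: VB_left)
  qed (simp add: VB_left_out)
next
  fix h u v assume h: "h \<in> C" and u: "u \<in> C" and v: "v \<in> C"
  have "mmul G (Vmat G a) b (cj h u) (cj h v) = (\<Sum>g\<in>C. a g * b (cj (inv g) (cj h u)) (cj h v))"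
    using h u by (simp add: VB_left)
  also have "\<dots> = (\<Sum>g\<in>C. a (cj h g) * b (cj (inv (cj h g)) (cj h u)) (cj h v))"
    using sum_cj[OF h, of "\<lambda>g. a g * b (cj (inv g) (cj h u)) (cj h v)"] by simp
  also have "\<dots> = (\<Sum>g\<in>C. a g * b (cj (inv g) u) v)"
  proof (intro sum.cong refl)
    fix g assume g: "g \<in> C"
    have "cj (inv (cj h g)) (cj h u) = cj h (cj (inv g) u)"
      using h g u by (simp add: cj_inv cj_cj_conj)
    then have "b (cj (inv (cj h g)) (cj h u)) (cj h v) = b (cj (inv g) u) v"
      using invm_inv[OF b h] g u v by simp
    moreover have "a (cj h g) = a g" using a h g by (simp add: classf_def)
    ultimately show "a (cj h g) * b (cj (inv (cj h g)) (cj h u)) (cj h v) = a g * b (cj (inv g) u) v" by simp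
  qed
  also have "\<dots> = mmul G (Vmat G a) b u v" using u by (simp add: VB_left)
  finally show "mmul G (Vmat G a) b (cj h u) (cj h v) = mmul G (Vmat G a) b u v" .
qed

lemma invm_BV: "classf a \<Longrightarrow> invm b \<Longrightarrow> invm (mmul G b (Vmat G a))"
  using invm_VB invm_comm by metis

end

context fgrp begin

lemma pair_class_eq: "pair_class G (u, v) = {(cj h u, cj h v) | h. h \<in> C}"
  by (simp add: pair_class_def cj_def)

lemma betas_eq: "betas G = {pair_class G (u, v) | u v. u \<in> Xs \<and> v \<in> Xs}"
  by (auto simp: betas_def Xs_def)

lemma betas_sub: assumes "\<beta> \<in> betas G" shows "\<beta> \<subseteq> Xs \<times> Xs"
proof
  fix p assume "p \<in> \<beta>"
  then obtain u v h where "u \<in> Xs" "v \<in> Xs" "h \<in> C" "p = (cj h u, cj h v)"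
    using assms by (auto simp: betas_eq pair_class_eq)
  moreover have "u \<in> C" "v \<in> C" using calculation Xs_sub by auto
  ultimately show "p \<in> Xs \<times> Xs" using Xs_cj by simp
qed

lemma betas_finite: "finite (betas G)"
proof -
  have "betas G \<subseteq> Pow (C \<times> C)" using betas_sub Xs_sub by blast
  then show ?thesis using fin by (meson finite_Pow_iff finite_SigmaI finite_subset)
qed

lemma betas_cj: assumes "\<beta> \<in> betas G" "(u, v) \<in> \<beta>" "h \<in> C" shows "(cj h u, cj h v) \<in> \<beta>"
proof -
  obtain s1 s2 where s: "s1 \<in> Xs" "s2 \<in> Xs" "\<beta> = pair_class G (s1, s2)" using assms(1) by (auto simp: betas_eq)
  then obtain k where k: "k \<in> C" "u = cj k s1" "v = cj k s2" using assms(2) by (auto simp: pair_class_eq)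
  have "cj h u = cj (h \<otimes> k) s1" "cj h v = cj (h \<otimes> k) s2"
    using k assms(3) s Xs_sub by (auto simp: cj_cj)
  then show ?thesis using s k assms(3) by (auto simp: pair_class_eq)
qed

lemma betas_cj_iff: assumes "\<beta> \<in> betas G" "h \<in> C" "u \<in> C" "v \<in> C"
  shows "((cj h u, cj h v) \<in> \<beta>) = ((u, v) \<in> \<beta>)"
  using betas_cj[OF assms(1) _ assms(2)] betas_cj[OF assms(1) _ inv_closed[OF assms(2)]] assms(2-4)
  by (metis cj_inv_cancel)

lemma betas_unique: assumes "\<beta> \<in> betas G" "(u, v) \<in> \<beta>" shows "\<beta> = pair_class G (u, v)"
proof -
  obtain s1 s2 where s: "s1 \<in> Xs" "s2 \<in> Xs" "\<beta> = pair_class G (s1, s2)" using assms(1) by (auto simp: betas_eq)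
  then obtain k where k: "k \<in> C" "u = cj k s1" "v = cj k s2" using assms(2) by (auto simp: pair_class_eq)
  have s1: "s1 \<in> C" "s2 \<in> C" using s Xs_sub by auto
  show ?thesis
  proof
    show "\<beta> \<subseteq> pair_class G (u, v)"
    proof
      fix p assume "p \<in> \<beta>"
      then obtain h where h: "h \<in> C" "p = (cj h s1, cj h s2)" using s by (auto simp: pair_class_eq)
      have "cj h s1 = cj (h \<otimes> inv k) u" "cj h s2 = cj (h \<otimes> inv k) v"
        using h k s1 by (auto simp: cj_cj[symmetric])
      then show "p \<in> pair_class G (u, v)" using h k by (auto simp: pair_class_eq)
    qed
  next
    show "pair_class G (u, v) \<subseteq> \<beta>"
    proof
      fix p assume "p \<in> pair_class G (u, v)"
      then obtain h where h: "h \<in> C" "p = (cj h u, cj h v)" by (auto simp: pair_class_eq)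
      then show "p \<in> \<beta>" using betas_cj[OF assms] by simp
    qed
  qed
qed

lemma pair_class_self: "u \<in> C \<Longrightarrow> v \<in> C \<Longrightarrow> (u, v) \<in> pair_class G (u, v)"
  by (auto simp: pair_class_eq intro!: exI[of _ \<one>])

lemma pair_class_in: "u \<in> Xs \<Longrightarrow> v \<in> Xs \<Longrightarrow> pair_class G (u, v) \<in> betas G"
  by (auto simp: betas_eq)

lemma spanB_eq: "spanB G = {b. invm b}"
proof safe
  fix b assume "b \<in> spanB G"
  then obtain c where b: "b = (\<lambda>x y. \<Sum>\<beta>\<in>betas G. c \<beta> * E_beta \<beta> x y)" by (auto simp: spanB_def)
  show "invm b"
  proof (rule invmI)
    fix u v assume "u \<notin> Xs \<or> v \<notin> Xs"
    then have "\<And>\<beta>. \<beta> \<in> betas G \<Longrightarrow> E_beta \<beta> u v = 0" using betas_sub by (auto simp: E_beta_def)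
    then show "b u v = 0" by (simp add: b)
  next
    fix h u v assume h: "h \<in> C" and u: "u \<in> C" and v: "v \<in> C"
    have "\<And>\<beta>. \<beta> \<in> betas G \<Longrightarrow> E_beta \<beta> (cj h u) (cj h v) = E_beta \<beta> u v"
      using betas_cj_iff h u v by (simp add: E_beta_def)
    then show "b (cj h u) (cj h v) = b u v" by (simp add: b)
  qed
next
  fix b assume b: "invm b"
  define c where "c \<beta> = b (fst (SOME p. p \<in> \<beta>)) (snd (SOME p. p \<in> \<beta>))" for \<beta> :: "('g \<times> 'g) set"
  have "b = (\<lambda>x y. \<Sum>\<beta>\<in>betas G. c \<beta> * E_beta \<beta> x y)"
  proof (intro ext)
    fix x y
    show "b x y = (\<Sum>\<beta>\<in>betas G. c \<beta> * E_beta \<beta> x y)"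
    proof (cases "x \<in> Xs \<and> y \<in> Xs")
      case True
      then have xC: "x \<in> C" "y \<in> C" using Xs_sub by auto
      have "(\<Sum>\<beta>\<in>betas G. c \<beta> * E_beta \<beta> x y) = (\<Sum>\<beta>\<in>betas G. if \<beta> = pair_class G (x, y) then c \<beta> else 0)"
      proof (intro sum.cong refl)
        fix \<beta> assume be: "\<beta> \<in> betas G"
        have "((x, y) \<in> \<beta>) = (\<beta> = pair_class G (x, y))"
          using betas_unique[OF be] pair_class_self[OF xC] by blast
        then show "c \<beta> * E_beta \<beta> x y = (if \<beta> = pair_class G (x, y) then c \<beta> else 0)"
          by (simp add: E_beta_def)
      qed
      also have "\<dots> = c (pair_class G (x, y))"
        using betas_finite pair_class_in True by simp
      also have "\<dots> = b x y"
      proof -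
        let ?p = "SOME p. p \<in> pair_class G (x, y)"
        have "?p \<in> pair_class G (x, y)" using pair_class_self[OF xC] by (rule someI)
        then obtain h where h: "h \<in> C" "?p = (cj h x, cj h y)" by (auto simp: pair_class_eq)
        then show ?thesis using invm_inv[OF b h(1) xC] by (simp add: c_def)
      qed
      finally show ?thesis by simp
    next
      case False
      then have "\<And>\<beta>. \<beta> \<in> betas G \<Longrightarrow> E_beta \<beta> x y = 0" using betas_sub by (auto simp: E_beta_def)
      then show ?thesis using False invm_supp[OF b] by auto
    qed
  qed
  then show "b \<in> spanB G" by (auto simp: spanB_def)
qed

end

lemma vs_scaleH: "vector_space (scaleH :: complex \<Rightarrow> 'g Hel \<Rightarrow> 'g Hel)"
  by unfold_locales (auto simp: scaleH_def fun_eq_iff prod_eq_iff algebra_simps)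

context fgrp begin

definition Hset :: "'g Hel set" where "Hset = {x. classf (fst x) \<and> invm (snd x)}"

lemma HA_eq: "HA G = {x. classf (fst x) \<and> snd x = 0}"
  by (auto simp: HA_def centerA_eq)
lemma HB_eq: "HB G = {x. fst x = 0 \<and> invm (snd x)}"
  by (auto simp: HB_def spanB_eq)

lemma classf_zero: "classf 0" by (simp add: classf_def supp_in_def)
lemma classf_add: "classf a \<Longrightarrow> classf b \<Longrightarrow> classf (a + b)" by (simp add: classf_def supp_in_def)
lemma classf_scale: "classf a \<Longrightarrow> classf (\<lambda>g. c * a g)" by (simp add: classf_def supp_in_def)
lemma classf_supp: "classf a \<Longrightarrow> supp_in G a" by (simp add: classf_def)

lemma direct_sum_eq: "direct_sum (HA G) (HB G) = Hset"
proof safe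
  fix x assume "x \<in> direct_sum (HA G) (HB G)"
  then show "x \<in> Hset" by (auto simp: direct_sum_def HA_eq HB_eq Hset_def)
next
  fix a b assume "(a, b) \<in> Hset"
  then have "(a, b) = (a, 0) + (0, b)" "(a, 0) \<in> HA G" "(0, b) \<in> HB G"
    by (auto simp: Hset_def HA_eq HB_eq)
  then show "(a, b) \<in> direct_sum (HA G) (HB G)" unfolding direct_sum_def by blast
qed

lemma multH_eq: "multH G (a1, b1) (a2, b2) = (conv G a1 a2,
   mmul G b1 b2 + mmul G (Vmat G a1) b2 + mmul G b1 (Vmat G a2))"
  by (simp add: multH_def)

lemma multH_add_left: "multH G (x + y) z = multH G x z + multH G y z"
  by (simp add: multH_def conv_add_left mmul_add_left mmul_add_right Vmat_add add_ac)
lemma multH_add_right: "multH G x (y + z) = multH G x y + multH G x z"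
  by (simp add: multH_def conv_add_right mmul_add_left mmul_add_right Vmat_add add_ac)
lemma multH_scale_left: "multH G (scaleH c x) y = scaleH c (multH G x y)"
  by (simp add: multH_def scaleH_def conv_scale_left mmul_scale_left mmul_scale_right Vmat_scale
      distrib_left fun_eq_iff)
lemma multH_scale_right: "multH G x (scaleH c y) = scaleH c (multH G x y)"
  by (simp add: multH_def scaleH_def conv_scale_right mmul_scale_left mmul_scale_right Vmat_scale
      distrib_left fun_eq_iff)

lemma multH_assoc: "multH G (multH G x y) z = multH G x (multH G y z)"
  by (simp add: multH_def conv_assoc Vmat_conv mmul_add_left mmul_add_right mmul_assoc add_ac)

lemma multH_closed: "x \<in> Hset \<Longrightarrow> y \<in> Hset \<Longrightarrow> multH G x y \<in> Hset"
  by (auto simp: Hset_def multH_def classf_conv intro!: invm_add invm_mmul invm_VB invm_BV)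

lemma oneH_eq: "oneH G = (delta \<one>, 0)"
  by (simp add: oneH_def delta_def fun_eq_iff)

lemma classf_delta1: "classf (delta \<one>)"
  by (auto simp: classf_def supp_in_def delta_def) (metis cj_inv_cancel cj_oneE inv_closed one_closed)

lemma oneH_in: "oneH G \<in> Hset"
  by (simp add: oneH_eq Hset_def classf_delta1 invm_zero)

lemma oneH_left: "x \<in> Hset \<Longrightarrow> multH G (oneH G) x = x"
  by (cases x) (auto simp: Hset_def oneH_eq multH_def conv_delta_left classf_supp Vmat_delta1
      intro!: mmul_idC_left dest: invm_supp_C)

lemma oneH_right: "x \<in> Hset \<Longrightarrow> multH G x (oneH G) = x"
  by (cases x) (auto simp: Hset_def oneH_eq multH_def conv_delta_right classf_supp Vmat_delta1
      intro!: mmul_idC_right dest: invm_supp_C)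

lemma fH_eq: "fH G x = (fst x \<one> + tr (snd x)) / of_nat (card C)"
  by (simp add: fH_def tr_def)

lemma fH_add: "fH G (x + y) = fH G x + fH G y"
  by (simp add: fH_eq tr_add add_divide_distrib)

lemma fH_scale: "fH G (scaleH c x) = c * fH G x"
  by (simp add: fH_eq scaleH_def tr_def sum_distrib_left[symmetric] distrib_left)

lemma formH_add_left: "formH G (x + y) z = formH G x z + formH G y z"
  by (simp add: formH_def multH_add_left fH_add)
lemma formH_add_right: "formH G x (y + z) = formH G x y + formH G x z"
  by (simp add: formH_def multH_add_right fH_add)
lemma formH_scale_left: "formH G (scaleH c x) y = c * formH G x y"
  by (simp add: formH_def multH_scale_left fH_scale)
lemma formH_scale_right: "formH G x (scaleH c y) = c * formH G x y"
  by (simp add: formH_def multH_scale_right fH_scale)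

lemma conv_one_sym: "conv G a b \<one> = conv G b a \<one>"
proof -
  have "conv G a b \<one> = (\<Sum>h\<in>C. a h * b (inv h))" by (simp add: conv_in)
  also have "\<dots> = (\<Sum>h\<in>C. a (inv h) * b (inv (inv h)))"
    using sum_inv[of "\<lambda>h. a h * b (inv h)"] by simp
  also have "\<dots> = conv G b a \<one>" by (simp add: conv_in mult.commute)
  finally show ?thesis .
qed

lemma formH_sym: "formH G x y = formH G y x"
  by (simp add: formH_def fH_eq multH_def conv_one_sym tr_add tr_mmul_comm add_ac)

lemma starH_eq: "starH G x = (sta (fst x), (\<lambda>u v. snd x v u))"
  by (simp add: starH_def sta_def)

lemma starH_add: "starH G (x + y) = starH G x + starH G y"
  by (simp add: starH_def fun_eq_iff)
lemma starH_scale: "starH G (scaleH c x) = scaleH c (starH G x)"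
  by (simp add: starH_def scaleH_def fun_eq_iff)

lemma conv_sta: "sta (conv G a b) = conv G (sta b) (sta a)"
proof (intro ext)
  fix z show "sta (conv G a b) z = conv G (sta b) (sta a) z"
  proof (cases "z \<in> C")
    case True
    have "conv G (sta b) (sta a) z = (\<Sum>h\<in>C. sta b h * sta a (inv h \<otimes> z))" using True by (simp add: conv_in)
    also have "\<dots> = (\<Sum>k\<in>C. sta b (z \<otimes> k) * sta a (inv (z \<otimes> k) \<otimes> z))"
      using sum_lmult[OF True, of "\<lambda>h. sta b h * sta a (inv h \<otimes> z)"] by simp
    also have "\<dots> = (\<Sum>k\<in>C. a k * b (inv k \<otimes> inv z))"
    proof (intro sum.cong refl)
      fix k assume k: "k \<in> C"
      have e1: "inv (z \<otimes> k) = inv k \<otimes> inv z" using k True by (simp add: inv_mult_group)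
      have e2: "inv (inv k \<otimes> inv z \<otimes> z) = k" using k True by (simp add: m_assoc)
      show "sta b (z \<otimes> k) * sta a (inv (z \<otimes> k) \<otimes> z) = a k * b (inv k \<otimes> inv z)"
        using k True by (simp add: sta_def e1 e2 mult.commute)
    qed
    also have "\<dots> = sta (conv G a b) z" using True by (simp add: sta_def conv_in)
    finally show ?thesis by simp
  qed (simp add: sta_def conv_out)
qed

lemma sta_sta: "supp_in G a \<Longrightarrow> sta (sta a) = a"
  by (auto simp: sta_def fun_eq_iff supp_in_def)

lemma classf_sta: assumes "classf a" shows "classf (sta a)"
  unfolding classf_def
proof (intro conjI ballI)
  show "supp_in G (sta a)" by (simp add: supp_in_def sta_def)
  fix h x assume h: "h \<in> C" and x: "x \<in> C"
  have "a (cj h (inv x)) = a (inv x)" using assms h x by (simp add: classf_def)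
  then show "sta a (cj h x) = sta a x" using h x by (simp add: sta_def cj_inv)
qed

lemma starH_closed: "x \<in> Hset \<Longrightarrow> starH G x \<in> Hset"
  by (simp add: Hset_def starH_eq classf_sta invm_T)

lemma starH_starH: "x \<in> Hset \<Longrightarrow> starH G (starH G x) = x"
  by (cases x) (simp add: Hset_def starH_eq sta_sta classf_supp)

lemma Vmat_sta_T: "Vmat G (sta a) = (\<lambda>u v. Vmat G a v u)"
  by (simp add: fun_eq_iff Vmat_sta)

lemma starH_mult: "starH G (multH G x y) = multH G (starH G y) (starH G x)"
proof -
  have "(\<lambda>u v. snd (multH G x y) v u) = snd (multH G (starH G y) (starH G x))"
    by (simp add: multH_def starH_eq Vmat_sta_T fun_eq_iff mmul_def mult.commute add_ac)
  then show ?thesis by (simp add: starH_eq multH_def conv_sta)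
qed

lemma fH_star: "fH G (starH G x) = fH G x"
  by (simp add: fH_eq starH_eq sta_def tr_def)

lemma formH_star: "formH G (starH G x) (starH G y) = formH G x y"
  by (simp add: formH_def starH_mult[symmetric] fH_star formH_sym[unfolded formH_def])

end

context fgrp begin

abbreviation nn :: complex where "nn \<equiv> of_nat (card C)"

lemma nn_nz: "nn \<noteq> 0"
  using fin one_closed by (auto simp: card_eq_0_iff)

lemma sum_const_C: "(\<Sum>h\<in>C. (c::complex)) = nn * c"
  by simp

definition clsf :: "'g \<Rightarrow> 'g \<Rightarrow> complex" where
  "clsf g = (\<lambda>z. \<Sum>h\<in>C. if z = cj h g then 1 else 0)"

definition eA :: "'g \<Rightarrow> 'g Hel" where "eA g = (clsf g, 0)"

definition ecl :: "'g \<Rightarrow> 'g \<Rightarrow> 'g \<Rightarrow> 'g \<Rightarrow> complex" where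
  "ecl x y = (\<lambda>u v. \<Sum>h\<in>C. if u = cj h x \<and> v = cj h y then 1 else 0)"

definition eB :: "'g \<times> 'g \<Rightarrow> 'g Hel" where "eB p = (0, ecl (fst p) (snd p))"

lemma classf_clsf: assumes g: "g \<in> C" shows "classf (clsf g)"
  unfolding classf_def
proof (intro conjI ballI)
  show "supp_in G (clsf g)" using g by (auto simp: supp_in_def clsf_def intro!: sum.neutral)
  fix k z assume k: "k \<in> C" and z: "z \<in> C"
  have "clsf g (cj k z) = (\<Sum>h\<in>C. if cj k z = cj (k \<otimes> h) g then 1 else 0)"
    using sum_lmult[OF k, of "\<lambda>h. if cj k z = cj h g then 1 else (0::complex)"] by (simp add: clsf_def)
  also have "\<dots> = clsf g z"
    unfolding clsf_def using k z g by (intro sum.cong refl) (simp add: cj_cj[symmetric] cj_inj)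
  finally show "clsf g (cj k z) = clsf g z" .
qed

lemma eA_in: "g \<in> C \<Longrightarrow> eA g \<in> HA G"
  by (simp add: eA_def HA_eq classf_clsf)

lemma invm_ecl: assumes x: "x \<in> Xs" and y: "y \<in> Xs" shows "invm (ecl x y)"
proof (rule invmI)
  have xC: "x \<in> C" "y \<in> C" using x y Xs_sub by auto
  fix u v assume "u \<notin> Xs \<or> v \<notin> Xs"
  then have "\<And>h. h \<in> C \<Longrightarrow> \<not> (u = cj h x \<and> v = cj h y)" using Xs_cj xC x y by auto
  then show "ecl x y u v = 0" unfolding ecl_def by (intro sum.neutral) auto
next
  have xC: "x \<in> C" "y \<in> C" using x y Xs_sub by auto
  fix k u v assume k: "k \<in> C" and u: "u \<in> C" and v: "v \<in> C"
  have "ecl x y (cj k u) (cj k v) = (\<Sum>h\<in>C. if cj k u = cj (k \<otimes> h) x \<and> cj k v = cj (k \<otimes> h) y then 1 else 0)"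
    using sum_lmult[OF k, of "\<lambda>h. if cj k u = cj h x \<and> cj k v = cj h y then 1 else (0::complex)"]
    by (simp add: ecl_def)
  also have "\<dots> = ecl x y u v"
    unfolding ecl_def using k u v xC by (intro sum.cong refl) (simp add: cj_cj[symmetric] cj_inj)
  finally show "ecl x y (cj k u) (cj k v) = ecl x y u v" .
qed

lemma eB_in: "p \<in> Xs \<times> Xs \<Longrightarrow> eB p \<in> HB G"
  by (auto simp: eB_def HB_eq invm_ecl)

lemma formH_A: "formH G (a, 0) (w, 0) = conv G a w \<one> / nn"
  by (simp add: formH_def fH_eq multH_def tr_def)

lemma formH_B: "formH G (0, b1) (0, b2) = tr (mmul G b1 b2) / nn"
  by (simp add: formH_def fH_eq multH_def)

lemma formH_AB: "formH G (a, 0) (0, b) = tr (mmul G (Vmat G a) b) / nn"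
  by (simp add: formH_def fH_eq multH_def)

lemma form_eA: assumes k: "k \<in> C" and w: "classf w" shows "formH G (eA k) (w, 0) = w (inv k)"
proof -
  have "conv G (clsf k) w \<one> = (\<Sum>m\<in>C. \<Sum>h\<in>C. if m = cj h k then w (inv m) else 0)"
    by (simp add: conv_in clsf_def sum_distrib_right if_distrib[of "\<lambda>x. x * _"] cong: if_cong)
  also have "\<dots> = (\<Sum>h\<in>C. \<Sum>m\<in>C. if m = cj h k then w (inv m) else 0)" by (rule sum.swap)
  also have "\<dots> = (\<Sum>h\<in>C. w (inv k))"
  proof (intro sum.cong refl)
    fix h assume h: "h \<in> C"
    have "w (inv (cj h k)) = w (inv k)" using w h k by (simp add: cj_inv classf_def)
    then show "(\<Sum>m\<in>C. if m = cj h k then w (inv m) else 0) = w (inv k)" using h k by (simp add: delta_sum)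
  qed
  finally show ?thesis using nn_nz by (simp add: eA_def formH_A)
qed


lemma Xs_finite: "finite Xs" using Xs_sub fin finite_subset by blast

lemma delta2: "finite S \<Longrightarrow> a \<in> S \<Longrightarrow> b \<in> S \<Longrightarrow>
  (\<Sum>x\<in>S. \<Sum>y\<in>S. if x = a \<and> y = b then f x y else (0::complex)) = f a b"
proof -
  assume S: "finite S" "a \<in> S" "b \<in> S"
  have "(\<Sum>x\<in>S. \<Sum>y\<in>S. if x = a \<and> y = b then f x y else 0) = (\<Sum>x\<in>S. if x = a then (\<Sum>y\<in>S. if y = b then f x y else 0) else 0)"
    by (intro sum.cong refl) auto
  also have "\<dots> = f a b" using S by simp
  finally show ?thesis .
qed

lemma tr_ecl: assumes x: "x \<in> Xs" and y: "y \<in> Xs" and b: "invm b"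
  shows "tr (mmul G (ecl x y) b) = nn * b y x"
proof -
  have xC: "x \<in> C" "y \<in> C" using x y Xs_sub by auto
  have "tr (mmul G (ecl x y) b) = (\<Sum>u\<in>C. \<Sum>z\<in>C. \<Sum>h\<in>C. if u = cj h x \<and> z = cj h y then b z u else 0)"
    by (simp add: tr_def mmul_def ecl_def sum_distrib_right if_distrib[of "\<lambda>t. t * _"] cong: if_cong)
  also have "\<dots> = (\<Sum>u\<in>C. \<Sum>h\<in>C. \<Sum>z\<in>C. if u = cj h x \<and> z = cj h y then b z u else 0)"
    by (intro sum.cong refl sum.swap)
  also have "\<dots> = (\<Sum>h\<in>C. \<Sum>u\<in>C. \<Sum>z\<in>C. if u = cj h x \<and> z = cj h y then b z u else 0)"
    by (rule sum.swap)
  also have "\<dots> = (\<Sum>h\<in>C. b y x)"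
  proof (intro sum.cong refl)
    fix h assume h: "h \<in> C"
    have "(\<Sum>u\<in>C. \<Sum>z\<in>C. if u = cj h x \<and> z = cj h y then b z u else 0) = b (cj h y) (cj h x)"
      using delta2[OF fin, of "cj h x" "cj h y" "\<lambda>u z. b z u"] h xC by simp
    also have "\<dots> = b y x" using invm_inv[OF b h] xC by simp
    finally show "(\<Sum>u\<in>C. \<Sum>z\<in>C. if u = cj h x \<and> z = cj h y then b z u else 0) = b y x" .
  qed
  finally show ?thesis by simp
qed

lemma form_eB: assumes x: "x \<in> Xs" and y: "y \<in> Xs" and b: "invm b"
  shows "formH G (eB (x, y)) (0, b) = b y x"
  using tr_ecl[OF assms] nn_nz by (simp add: eB_def formH_B)

definition EA :: "'g \<Rightarrow> 'g \<Rightarrow> complex" where "EA g k = (if k = inv g then 1 / nn else 0)"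
definition EB :: "'g \<times> 'g \<Rightarrow> 'g \<times> 'g \<Rightarrow> complex" where "EB p q = (if q = (snd p, fst p) then 1 / nn else 0)"

lemma frameA: assumes w: "w \<in> HA G"
  shows "w = (\<Sum>g\<in>C. scaleH (\<Sum>k\<in>C. EA g k * formH G (eA k) w) (eA g))"
proof -
  obtain a where wa: "w = (a, 0)" and a: "classf a" using w by (cases w) (auto simp: HA_eq)
  have c: "(\<Sum>k\<in>C. EA g k * formH G (eA k) w) = a g / nn" if g: "g \<in> C" for g
  proof -
    have "(\<Sum>k\<in>C. EA g k * formH G (eA k) w) = (\<Sum>k\<in>C. if k = inv g then formH G (eA k) w / nn else 0)"
      by (intro sum.cong refl) (simp add: EA_def)
    also have "\<dots> = formH G (eA (inv g)) w / nn" using g by (simp add: delta_sum)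
    also have "\<dots> = a g / nn" using form_eA[OF inv_closed[OF g] a] g wa by simp
    finally show ?thesis .
  qed
  have "(\<Sum>g\<in>C. scaleH (\<Sum>k\<in>C. EA g k * formH G (eA k) w) (eA g)) = (\<Sum>g\<in>C. scaleH (a g / nn) (eA g))"
    using c by (intro sum.cong refl) simp
  also have "\<dots> = (a, 0)"
  proof (rule prod_eqI)
    show "snd (\<Sum>g\<in>C. scaleH (a g / nn) (eA g)) = snd (a, 0)"
      by (simp add: snd_sum scaleH_def eA_def fun_eq_iff)
    show "fst (\<Sum>g\<in>C. scaleH (a g / nn) (eA g)) = fst (a, 0)"
    proof (rule ext)
      fix z
      have e: "fst (\<Sum>g\<in>C. scaleH (a g / nn) (eA g)) z = (\<Sum>g\<in>C. a g / nn * clsf g z)"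
        by (simp add: fst_sum sum_apply_fun scaleH_def eA_def)
      show "fst (\<Sum>g\<in>C. scaleH (a g / nn) (eA g)) z = fst (a, 0) z"
      proof (cases "z \<in> C")
        case True
        have "(\<Sum>g\<in>C. a g / nn * clsf g z) = (\<Sum>g\<in>C. \<Sum>h\<in>C. if g = cj (inv h) z then a g / nn else 0)"
          unfolding clsf_def sum_distrib_left
        proof (intro sum.cong refl)
          fix g h assume g: "g \<in> C" and h: "h \<in> C"
          have "(z = cj h g) = (g = cj (inv h) z)" using cj_eq_iff[OF h True g] .
          then show "a g / nn * (if z = cj h g then 1 else 0) = (if g = cj (inv h) z then a g / nn else 0)"
            by simp
        qed
        also have "\<dots> = (\<Sum>h\<in>C. \<Sum>g\<in>C. if g = cj (inv h) z then a g / nn else 0)" by (rule sum.swap)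
        also have "\<dots> = (\<Sum>h\<in>C. a z / nn)"
        proof (intro sum.cong refl)
          fix h assume h: "h \<in> C"
          have "a (cj (inv h) z) = a z" using a h True by (simp add: classf_def)
          then show "(\<Sum>g\<in>C. if g = cj (inv h) z then a g / nn else 0) = a z / nn"
            using h True by (simp add: delta_sum)
        qed
        also have "\<dots> = a z" using nn_nz by simp
        finally show ?thesis using e by simp
      next
        case False
        have "\<And>g. g \<in> C \<Longrightarrow> clsf g z = 0" using classf_clsf False by (simp add: classf_def supp_in_def)
        moreover have "a z = 0" using a False by (simp add: classf_def supp_in_def)
        ultimately show ?thesis using e by simp
      qed
    qed
  qed
  finally show ?thesis using wa by simp
qed

lemma frameB: assumes w: "w \<in> HB G"
  shows "w = (\<Sum>p\<in>Xs \<times> Xs. scaleH (\<Sum>q\<in>Xs \<times> Xs. EB p q * formH G (eB q) w) (eB p))"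
proof -
  obtain b where wb: "w = (0, b)" and b: "invm b" using w by (cases w) (auto simp: HB_eq)
  have fX: "finite (Xs \<times> Xs)" using Xs_finite by simp
  have c: "(\<Sum>q\<in>Xs \<times> Xs. EB p q * formH G (eB q) w) = b (fst p) (snd p) / nn" if p: "p \<in> Xs \<times> Xs" for p
  proof -
    have "(\<Sum>q\<in>Xs \<times> Xs. EB p q * formH G (eB q) w) = (\<Sum>q\<in>Xs \<times> Xs. if q = (snd p, fst p) then formH G (eB q) w / nn else 0)"
      by (intro sum.cong refl) (simp add: EB_def)
    also have "\<dots> = formH G (eB (snd p, fst p)) w / nn" using p fX by (simp add: mem_Times_iff)
    also have "\<dots> = b (fst p) (snd p) / nn" using form_eB[OF _ _ b, of "snd p" "fst p"] p wb by (simp add: mem_Times_iff)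
    finally show ?thesis .
  qed
  have "(\<Sum>p\<in>Xs \<times> Xs. scaleH (\<Sum>q\<in>Xs \<times> Xs. EB p q * formH G (eB q) w) (eB p))
     = (\<Sum>p\<in>Xs \<times> Xs. scaleH (b (fst p) (snd p) / nn) (eB p))"
    using c by (intro sum.cong refl) simp
  also have "\<dots> = (0, b)"
  proof (rule prod_eqI)
    show "fst (\<Sum>p\<in>Xs \<times> Xs. scaleH (b (fst p) (snd p) / nn) (eB p)) = fst (0, b)"
      by (simp add: fst_sum scaleH_def eB_def fun_eq_iff)
    show "snd (\<Sum>p\<in>Xs \<times> Xs. scaleH (b (fst p) (snd p) / nn) (eB p)) = snd (0, b)"
    proof (intro ext)
      fix u v
      have "snd (\<Sum>p\<in>Xs \<times> Xs. scaleH (b (fst p) (snd p) / nn) (eB p)) u v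
          = (\<Sum>p\<in>Xs \<times> Xs. b (fst p) (snd p) / nn * ecl (fst p) (snd p) u v)"
        by (simp add: snd_sum sum_apply_fun2 scaleH_def eB_def)
      also have "\<dots> = (\<Sum>x\<in>Xs. \<Sum>y\<in>Xs. b x y / nn * ecl x y u v)"
        by (simp add: sum.cartesian_product split_def)
      also have "\<dots> = (\<Sum>x\<in>Xs. \<Sum>y\<in>Xs. \<Sum>h\<in>C. if u = cj h x \<and> v = cj h y then b x y / nn else 0)"
        by (simp add: ecl_def sum_distrib_left if_distrib[of "\<lambda>t. _ * t"] cong: if_cong)
      also have "\<dots> = (\<Sum>x\<in>Xs. \<Sum>h\<in>C. \<Sum>y\<in>Xs. if u = cj h x \<and> v = cj h y then b x y / nn else 0)"
        by (intro sum.cong refl sum.swap)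
      also have "\<dots> = (\<Sum>h\<in>C. \<Sum>x\<in>Xs. \<Sum>y\<in>Xs. if u = cj h x \<and> v = cj h y then b x y / nn else 0)"
        by (rule sum.swap)
      also have "\<dots> = b u v"
      proof (cases "u \<in> Xs \<and> v \<in> Xs")
        case True
        then have uC: "u \<in> C" "v \<in> C" using Xs_sub by auto
        have "(\<Sum>h\<in>C. \<Sum>x\<in>Xs. \<Sum>y\<in>Xs. if u = cj h x \<and> v = cj h y then b x y / nn else 0) = (\<Sum>h\<in>C. b u v / nn)"
        proof (intro sum.cong refl)
          fix h assume h: "h \<in> C"
          have "(\<Sum>x\<in>Xs. \<Sum>y\<in>Xs. if u = cj h x \<and> v = cj h y then b x y / nn else 0)
              = (\<Sum>x\<in>Xs. \<Sum>y\<in>Xs. if x = cj (inv h) u \<and> y = cj (inv h) v then b x y / nn else 0)"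
          proof (intro sum.cong refl)
            fix x y assume x: "x \<in> Xs" and y: "y \<in> Xs"
            have "(u = cj h x) = (x = cj (inv h) u)" using cj_eq_iff[OF h uC(1)] x Xs_sub by blast
            moreover have "(v = cj h y) = (y = cj (inv h) v)" using cj_eq_iff[OF h uC(2)] y Xs_sub by blast
            ultimately show "(if u = cj h x \<and> v = cj h y then b x y / nn else 0) = (if x = cj (inv h) u \<and> y = cj (inv h) v then b x y / nn else 0)"
              by simp
          qed
          also have "\<dots> = b (cj (inv h) u) (cj (inv h) v) / nn"
            using delta2[OF Xs_finite, of "cj (inv h) u" "cj (inv h) v" "\<lambda>x y. b x y / nn"] Xs_cj h uC True by simp
          also have "\<dots> = b u v / nn" using invm_inv[OF b inv_closed[OF h] uC] by simp
          finally show "(\<Sum>x\<in>Xs. \<Sum>y\<in>Xs. if u = cj h x \<and> v = cj h y then b x y / nn else 0) = b u v / nn" .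
        qed
        also have "\<dots> = b u v" using nn_nz by simp
        finally show ?thesis .
      next
        case False
        have nz: "\<And>h x y. h \<in> C \<Longrightarrow> x \<in> Xs \<Longrightarrow> y \<in> Xs \<Longrightarrow> \<not> (u = cj h x \<and> v = cj h y)"
        proof -
          fix h x y assume h: "h \<in> C" and x: "x \<in> Xs" and y: "y \<in> Xs"
          have "cj h x \<in> Xs" "cj h y \<in> Xs" using Xs_cj h x y Xs_sub by auto
          then show "\<not> (u = cj h x \<and> v = cj h y)" using False by auto
        qed
        have "(\<Sum>h\<in>C. \<Sum>x\<in>Xs. \<Sum>y\<in>Xs. if u = cj h x \<and> v = cj h y then b x y / nn else 0) = 0"
          by (intro sum.neutral ballI if_not_P nz; assumption)
        then show ?thesis using False invm_supp[OF b] by simp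
      qed
      finally show "snd (\<Sum>p\<in>Xs \<times> Xs. scaleH (b (fst p) (snd p) / nn) (eB p)) u v = snd (0, b) u v" by simp
    qed
  qed
  finally show ?thesis using wb by simp
qed

lemma nondegA: assumes x: "x \<in> HA G" and z: "\<forall>y\<in>HA G. formH G x y = 0" shows "x = 0"
proof -
  obtain a where xa: "x = (a, 0)" and a: "classf a" using x by (cases x) (auto simp: HA_eq)
  have "a g = 0" for g
  proof (cases "g \<in> C")
    case True
    have "formH G (eA (inv g)) x = a g" using form_eA[OF inv_closed[OF True] a] True xa by simp
    moreover have "formH G x (eA (inv g)) = 0" using z eA_in True by simp
    ultimately show ?thesis using formH_sym by metis
  next
    case False then show ?thesis using a by (simp add: classf_def supp_in_def)
  qed
  then show ?thesis using xa by (simp add: fun_eq_iff zero_prod_def)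
qed

lemma nondegB: assumes x: "x \<in> HB G" and z: "\<forall>y\<in>HB G. formH G x y = 0" shows "x = 0"
proof -
  obtain b where xb: "x = (0, b)" and b: "invm b" using x by (cases x) (auto simp: HB_eq)
  have "b u v = 0" for u v
  proof (cases "u \<in> Xs \<and> v \<in> Xs")
    case True
    have "formH G (eB (v, u)) x = b u v" using form_eB[OF _ _ b, of v u] True xb by simp
    moreover have "formH G x (eB (v, u)) = 0" using z eB_in True by simp
    ultimately show ?thesis using formH_sym by metis
  next
    case False then show ?thesis using invm_supp[OF b] by auto
  qed
  then show ?thesis using xb by (simp add: fun_eq_iff zero_prod_def)
qed

end

definition bilin :: "(complex \<Rightarrow> 'h::ab_group_add \<Rightarrow> 'h) \<Rightarrow> ('h \<Rightarrow> 'h \<Rightarrow> complex) \<Rightarrow> bool" where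
  "bilin scale \<Phi> \<longleftrightarrow> (\<forall>x y z. \<Phi> (x + y) z = \<Phi> x z + \<Phi> y z) \<and> (\<forall>c x z. \<Phi> (scale c x) z = c * \<Phi> x z)
     \<and> (\<forall>x y z. \<Phi> z (x + y) = \<Phi> z x + \<Phi> z y) \<and> (\<forall>c x z. \<Phi> z (scale c x) = c * \<Phi> z x)"

locale bil = vector_space scale for scale :: "complex \<Rightarrow> 'h::ab_group_add \<Rightarrow> 'h" +
  fixes form :: "'h \<Rightarrow> 'h \<Rightarrow> complex" and X :: "'h set"
  assumes fb: "bilin scale form"
    and fsym: "x \<in> X \<Longrightarrow> y \<in> X \<Longrightarrow> form x y = form y x"
begin

lemma phi_zero_left: "bilin scale \<Phi> \<Longrightarrow> \<Phi> 0 z = 0"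
  by (metis bilin_def mult_zero_left scale_zero_left)
lemma phi_zero_right: "bilin scale \<Phi> \<Longrightarrow> \<Phi> z 0 = 0"
  by (metis bilin_def mult_zero_left scale_zero_left)

lemma phi_suml: assumes "bilin scale \<Phi>"
  shows "\<Phi> (\<Sum>a\<in>A. scale (c a) (v a)) z = (\<Sum>a\<in>A. c a * \<Phi> (v a) z)"
proof (induct A rule: infinite_finite_induct)
  case (infinite A) then show ?case using phi_zero_left[OF assms] by simp
next
  case empty then show ?case using phi_zero_left[OF assms] by simp
next
  case (insert a A) then show ?case using assms by (simp add: bilin_def)
qed

lemma phi_sumr: assumes "bilin scale \<Phi>"
  shows "\<Phi> z (\<Sum>a\<in>A. scale (c a) (v a)) = (\<Sum>a\<in>A. c a * \<Phi> z (v a))"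
proof (induct A rule: infinite_finite_induct)
  case (infinite A) then show ?case using phi_zero_right[OF assms] by simp
next
  case empty then show ?case using phi_zero_right[OF assms] by simp
next
  case (insert a A) then show ?case using assms by (simp add: bilin_def)
qed

lemma reproduce:
  assumes B: "basis_invgram scale form X n f F" and w: "w \<in> X"
  shows "w = (\<Sum>i<n. scale (\<Sum>j<n. F i j * form (f j) w) (f i))"
proof -
  have inj: "inj_on f {..<n}" and sp: "span (f ` {..<n}) = X"
    and g1: "\<And>i k. i < n \<Longrightarrow> k < n \<Longrightarrow> (\<Sum>j<n. F i j * form (f j) (f k)) = (if i = k then 1 else 0)"
    using B by (auto simp: basis_invgram_def)
  have "w \<in> span (f ` {..<n})" using w sp by simp
  then obtain u where "w = (\<Sum>v\<in>f ` {..<n}. scale (u v) v)" using span_finite[of "f ` {..<n}"] by auto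
  also have "\<dots> = (\<Sum>k<n. scale (u (f k)) (f k))" using sum.reindex[OF inj] by simp
  finally have wc: "w = (\<Sum>k<n. scale (u (f k)) (f k))" .
  have co: "(\<Sum>j<n. F i j * form (f j) w) = u (f i)" if i: "i < n" for i
  proof -
    have "(\<Sum>j<n. F i j * form (f j) w) = (\<Sum>j<n. F i j * (\<Sum>k<n. u (f k) * form (f j) (f k)))"
      by (subst wc) (simp add: phi_sumr[OF fb])
    also have "\<dots> = (\<Sum>j<n. \<Sum>k<n. u (f k) * (F i j * form (f j) (f k)))"
      by (simp add: sum_distrib_left mult.left_commute)
    also have "\<dots> = (\<Sum>k<n. \<Sum>j<n. u (f k) * (F i j * form (f j) (f k)))" by (rule sum.swap)
    also have "\<dots> = (\<Sum>k<n. u (f k) * (if i = k then 1 else 0))"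
      by (intro sum.cong refl) (simp add: sum_distrib_left[symmetric] g1 i)
    also have "\<dots> = u (f i)" using i by (simp add: if_distrib[of "\<lambda>t. _ * t"] cong: if_cong)
    finally show ?thesis .
  qed
  show ?thesis using co by (subst wc) (intro sum.cong refl, simp)
qed

lemma frame_change:
  assumes B: "basis_invgram scale form X n f F"
    and J: "finite J" and eX: "\<And>a. a \<in> J \<Longrightarrow> e a \<in> X"
    and fr: "\<And>w. w \<in> X \<Longrightarrow> w = (\<Sum>a\<in>J. scale (\<Sum>b\<in>J. E a b * form (e b) w) (e a))"
    and P: "bilin scale \<Phi>"
  shows "(\<Sum>i<n. \<Sum>j<n. F i j * \<Phi> (f i) (f j)) = (\<Sum>a\<in>J. \<Sum>b\<in>J. E a b * \<Phi> (e a) (e b))"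
proof -
  have fX: "\<And>i. i < n \<Longrightarrow> f i \<in> X" using B by (auto simp: basis_invgram_def)
  have g1: "\<And>i k. i < n \<Longrightarrow> k < n \<Longrightarrow> (\<Sum>j<n. F i j * form (f j) (f k)) = (if i = k then 1 else 0)"
    using B by (auto simp: basis_invgram_def)
  define \<gamma> where "\<gamma> i a = (\<Sum>j<n. F i j * form (f j) (e a))" for i a
  have ea: "\<And>a. a \<in> J \<Longrightarrow> e a = (\<Sum>i<n. scale (\<gamma> i a) (f i))"
    unfolding \<gamma>_def using reproduce[OF B eX] by blast
  have phi_e: "\<Phi> (e a) (e b) = (\<Sum>i<n. \<Sum>k<n. \<gamma> i a * \<gamma> k b * \<Phi> (f i) (f k))" if a: "a \<in> J" and b: "b \<in> J" for a b
  proof -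
    have "\<Phi> (e a) (e b) = (\<Sum>i<n. \<gamma> i a * \<Phi> (f i) (e b))"
      by (subst ea[OF a]) (simp add: phi_suml[OF P])
    also have "\<dots> = (\<Sum>i<n. \<gamma> i a * (\<Sum>k<n. \<gamma> k b * \<Phi> (f i) (f k)))"
      by (subst ea[OF b]) (simp add: phi_sumr[OF P])
    also have "\<dots> = (\<Sum>i<n. \<Sum>k<n. \<gamma> i a * \<gamma> k b * \<Phi> (f i) (f k))"
      by (simp add: sum_distrib_left mult.assoc)
    finally show ?thesis .
  qed
  have inner: "(\<Sum>a\<in>J. \<Sum>b\<in>J. E a b * (\<gamma> i a * \<gamma> k b)) = F i k" if i: "i < n" and k: "k < n" for i k
  proof -
    have fl: "(\<Sum>a\<in>J. \<Sum>b\<in>J. E a b * (form (f j) (e a) * form (f l) (e b))) = form (f j) (f l)"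
      if j: "j < n" and l: "l < n" for j l
    proof -
      have "(\<Sum>a\<in>J. \<Sum>b\<in>J. E a b * (form (f j) (e a) * form (f l) (e b)))
          = (\<Sum>a\<in>J. (\<Sum>b\<in>J. E a b * form (e b) (f l)) * form (f j) (e a))"
        using fsym[OF fX[OF l] eX] by (intro sum.cong refl) (simp add: sum_distrib_left sum_distrib_right mult_ac)
      also have "\<dots> = form (f j) (\<Sum>a\<in>J. scale (\<Sum>b\<in>J. E a b * form (e b) (f l)) (e a))"
        by (simp add: phi_sumr[OF fb])
      also have "\<dots> = form (f j) (f l)" using fr[OF fX[OF l]] by simp
      finally show ?thesis .
    qed
    have "(\<Sum>a\<in>J. \<Sum>b\<in>J. E a b * (\<gamma> i a * \<gamma> k b))
        = (\<Sum>a\<in>J. \<Sum>b\<in>J. \<Sum>j<n. \<Sum>l<n. F i j * F k l * (E a b * (form (f j) (e a) * form (f l) (e b))))"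
      unfolding \<gamma>_def by (intro sum.cong refl) (simp only: sum_product sum_distrib_left mult_ac, subst sum.swap, simp only: mult_ac)
    also have "\<dots> = (\<Sum>a\<in>J. \<Sum>j<n. \<Sum>b\<in>J. \<Sum>l<n. F i j * F k l * (E a b * (form (f j) (e a) * form (f l) (e b))))"
      by (intro sum.cong refl sum.swap)
    also have "\<dots> = (\<Sum>j<n. \<Sum>a\<in>J. \<Sum>b\<in>J. \<Sum>l<n. F i j * F k l * (E a b * (form (f j) (e a) * form (f l) (e b))))"
      by (rule sum.swap)
    also have "\<dots> = (\<Sum>j<n. \<Sum>a\<in>J. \<Sum>l<n. \<Sum>b\<in>J. F i j * F k l * (E a b * (form (f j) (e a) * form (f l) (e b))))"
      by (intro sum.cong refl sum.swap)
    also have "\<dots> = (\<Sum>j<n. \<Sum>l<n. \<Sum>a\<in>J. \<Sum>b\<in>J. F i j * F k l * (E a b * (form (f j) (e a) * form (f l) (e b))))"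
      by (intro sum.cong refl sum.swap)
    also have "\<dots> = (\<Sum>j<n. \<Sum>l<n. F i j * F k l * form (f j) (f l))"
      by (intro sum.cong refl) (simp add: sum_distrib_left[symmetric] fl)
    also have "\<dots> = (\<Sum>j<n. F i j * (\<Sum>l<n. F k l * form (f l) (f j)))"
      using fsym fX by (intro sum.cong refl) (simp add: sum_distrib_left mult_ac)
    also have "\<dots> = (\<Sum>j<n. F i j * (if k = j then 1 else 0))"
      by (intro sum.cong refl) (simp add: g1 k)
    also have "\<dots> = F i k" using k by (simp add: if_distrib[of "\<lambda>t. _ * t"] cong: if_cong)
    finally show ?thesis .
  qed
  have "(\<Sum>a\<in>J. \<Sum>b\<in>J. E a b * \<Phi> (e a) (e b))
      = (\<Sum>a\<in>J. \<Sum>b\<in>J. \<Sum>i<n. \<Sum>k<n. E a b * (\<gamma> i a * \<gamma> k b) * \<Phi> (f i) (f k))"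
    by (intro sum.cong refl) (simp add: phi_e sum_distrib_left mult_ac)
  also have "\<dots> = (\<Sum>a\<in>J. \<Sum>i<n. \<Sum>b\<in>J. \<Sum>k<n. E a b * (\<gamma> i a * \<gamma> k b) * \<Phi> (f i) (f k))"
    by (intro sum.cong refl sum.swap)
  also have "\<dots> = (\<Sum>i<n. \<Sum>a\<in>J. \<Sum>b\<in>J. \<Sum>k<n. E a b * (\<gamma> i a * \<gamma> k b) * \<Phi> (f i) (f k))"
    by (rule sum.swap)
  also have "\<dots> = (\<Sum>i<n. \<Sum>a\<in>J. \<Sum>k<n. \<Sum>b\<in>J. E a b * (\<gamma> i a * \<gamma> k b) * \<Phi> (f i) (f k))"
    by (intro sum.cong refl sum.swap)
  also have "\<dots> = (\<Sum>i<n. \<Sum>k<n. \<Sum>a\<in>J. \<Sum>b\<in>J. E a b * (\<gamma> i a * \<gamma> k b) * \<Phi> (f i) (f k))"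
    by (intro sum.cong refl sum.swap)
  also have "\<dots> = (\<Sum>i<n. \<Sum>k<n. F i k * \<Phi> (f i) (f k))"
    by (intro sum.cong refl) (simp add: sum_distrib_right[symmetric] inner)
  finally show ?thesis by simp
qed

end

context fgrp begin

definition Uf :: "'g \<Rightarrow> complex" where "Uf z = (\<Sum>a\<in>C. if a \<otimes> a = z then 1 else 0)"

lemma classf_Uf: "classf Uf"
  unfolding classf_def
proof (intro conjI ballI)
  show "supp_in G Uf" by (auto simp: supp_in_def Uf_def intro!: sum.neutral)
  fix k z assume k: "k \<in> C" and z: "z \<in> C"
  have "Uf (cj k z) = (\<Sum>a\<in>C. if cj k a \<otimes> cj k a = cj k z then 1 else 0)"
    using sum_cj[OF k, of "\<lambda>a. if a \<otimes> a = cj k z then 1 else (0::complex)"] by (simp add: Uf_def)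
  also have "\<dots> = Uf z" unfolding Uf_def
  proof (intro sum.cong refl)
    fix a assume a: "a \<in> C"
    have "(cj k a \<otimes> cj k a = cj k z) = (a \<otimes> a = z)" using k a z by (simp add: cj_mult[symmetric] cj_inj)
    then show "(if cj k a \<otimes> cj k a = cj k z then 1 else (0::complex)) = (if a \<otimes> a = z then 1 else 0)" by simp
  qed
  finally show "Uf (cj k z) = Uf z" .
qed

lemma sta_clsf: assumes g: "g \<in> C" shows "sta (clsf (inv g)) = clsf g"
proof (intro ext)
  fix z show "sta (clsf (inv g)) z = clsf g z"
  proof (cases "z \<in> C")
    case True
    have "sta (clsf (inv g)) z = (\<Sum>h\<in>C. if inv z = cj h (inv g) then 1 else 0)" using True by (simp add: sta_def clsf_def)
    also have "\<dots> = clsf g z" unfolding clsf_def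
    proof (intro sum.cong refl)
      fix h assume h: "h \<in> C"
      have "(inv z = cj h (inv g)) = (z = cj h g)" using h g True by (metis cj_inv cj_closed inv_inv inv_closed)
      then show "(if inv z = cj h (inv g) then 1 else (0::complex)) = (if z = cj h g then 1 else 0)" by simp
    qed
    finally show ?thesis .
  next
    case False
    then show ?thesis using classf_clsf[OF g] by (simp add: sta_def classf_def supp_in_def)
  qed
qed

lemma conv_UU_aux: assumes z: "z \<in> C"
  shows "conv G Uf Uf z = (\<Sum>a\<in>C. \<Sum>b\<in>C. if a \<otimes> a \<otimes> (b \<otimes> b) = z then 1 else 0)"
proof -
  have "conv G Uf Uf z = (\<Sum>h\<in>C. \<Sum>a\<in>C. if a \<otimes> a = h then Uf (inv h \<otimes> z) else 0)"
    using z by (simp add: conv_in Uf_def sum_distrib_right if_distrib[of "\<lambda>t. t * _"] cong: if_cong)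
  also have "\<dots> = (\<Sum>a\<in>C. \<Sum>h\<in>C. if h = a \<otimes> a then Uf (inv h \<otimes> z) else 0)"
    by (subst sum.swap) (intro sum.cong refl, auto)
  also have "\<dots> = (\<Sum>a\<in>C. Uf (inv (a \<otimes> a) \<otimes> z))" by (intro sum.cong refl) (simp add: delta_sum)
  also have "\<dots> = (\<Sum>a\<in>C. \<Sum>b\<in>C. if a \<otimes> a \<otimes> (b \<otimes> b) = z then 1 else 0)"
    unfolding Uf_def
  proof (intro sum.cong refl)
    fix a b assume a: "a \<in> C" and b: "b \<in> C"
    have "(b \<otimes> b = inv (a \<otimes> a) \<otimes> z) = (a \<otimes> a \<otimes> (b \<otimes> b) = z)"
      using a b z by (metis linv_cancel rinv_cancel m_closed inv_closed inv_inv)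
    then show "(if b \<otimes> b = inv (a \<otimes> a) \<otimes> z then 1 else (0::complex)) = (if a \<otimes> a \<otimes> (b \<otimes> b) = z then 1 else 0)"
      by simp
  qed
  finally show ?thesis .
qed

lemma conv_clsf2: assumes z: "z \<in> C" and g: "g \<in> C"
  shows "conv G (clsf g) (clsf g) z = (\<Sum>h\<in>C. \<Sum>k\<in>C. if cj h g \<otimes> cj k g = z then 1 else 0)"
proof -
  have "conv G (clsf g) (clsf g) z = (\<Sum>m\<in>C. \<Sum>h\<in>C. if m = cj h g then clsf g (inv m \<otimes> z) else 0)"
    using z by (simp add: conv_in clsf_def[of g] sum_distrib_right if_distrib[of "\<lambda>t. t * _"] cong: if_cong)
  also have "\<dots> = (\<Sum>h\<in>C. \<Sum>m\<in>C. if m = cj h g then clsf g (inv m \<otimes> z) else 0)" by (rule sum.swap)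
  also have "\<dots> = (\<Sum>h\<in>C. clsf g (inv (cj h g) \<otimes> z))" using g by (intro sum.cong refl) (simp add: delta_sum)
  also have "\<dots> = (\<Sum>h\<in>C. \<Sum>k\<in>C. if cj h g \<otimes> cj k g = z then 1 else 0)"
    unfolding clsf_def
  proof (intro sum.cong refl)
    fix h k assume h: "h \<in> C" and k: "k \<in> C"
    have "(inv (cj h g) \<otimes> z = cj k g) = (cj h g \<otimes> cj k g = z)"
      using h k g z by (metis linv_cancel rinv_cancel cj_closed inv_closed)
    then show "(if inv (cj h g) \<otimes> z = cj k g then 1 else (0::complex)) = (if cj h g \<otimes> cj k g = z then 1 else 0)"
      by simp
  qed
  finally show ?thesis .
qed

lemma conv_UU: assumes z: "z \<in> C"
  shows "(\<Sum>g\<in>C. conv G (clsf g) (clsf g) z) = nn * conv G Uf Uf z"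
proof -
  define N where "N = (\<Sum>g\<in>C. \<Sum>m\<in>C. if g \<otimes> cj m g = z then 1 else (0::complex))"
  have step: "(\<Sum>g\<in>C. \<Sum>k\<in>C. if cj h g \<otimes> cj k g = z then 1 else (0::complex)) = N" if h: "h \<in> C" for h
  proof -
    have "(\<Sum>g\<in>C. \<Sum>k\<in>C. if cj h g \<otimes> cj k g = z then 1 else (0::complex))
        = (\<Sum>g\<in>C. \<Sum>k\<in>C. if cj h (cj (inv h) g) \<otimes> cj k (cj (inv h) g) = z then 1 else (0::complex))"
      using sum_cj[OF inv_closed[OF h], of "\<lambda>g. \<Sum>k\<in>C. if cj h g \<otimes> cj k g = z then 1 else (0::complex)"] by simp
    also have "\<dots> = (\<Sum>g\<in>C. \<Sum>k\<in>C. if g \<otimes> cj (k \<otimes> inv h) g = z then 1 else (0::complex))"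
      using h by (intro sum.cong refl) (simp add: cj_cj)
    also have "\<dots> = (\<Sum>g\<in>C. \<Sum>m\<in>C. if g \<otimes> cj (m \<otimes> h \<otimes> inv h) g = z then 1 else (0::complex))"
    proof (rule sum.cong[OF refl])
      fix g assume g: "g \<in> C"
      show "(\<Sum>k\<in>C. if g \<otimes> cj (k \<otimes> inv h) g = z then 1 else (0::complex)) = (\<Sum>m\<in>C. if g \<otimes> cj (m \<otimes> h \<otimes> inv h) g = z then 1 else 0)"
        by (rule sum_rmult[OF h, of "\<lambda>k. if g \<otimes> cj (k \<otimes> inv h) g = z then 1 else (0::complex)", symmetric])
    qed
    also have "\<dots> = N" unfolding N_def using h by (intro sum.cong refl) (simp add: m_assoc)
    finally show ?thesis .
  qed
  have "(\<Sum>g\<in>C. conv G (clsf g) (clsf g) z) = (\<Sum>g\<in>C. \<Sum>h\<in>C. \<Sum>k\<in>C. if cj h g \<otimes> cj k g = z then 1 else 0)"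
    using z by (simp add: conv_clsf2)
  also have "\<dots> = (\<Sum>h\<in>C. \<Sum>g\<in>C. \<Sum>k\<in>C. if cj h g \<otimes> cj k g = z then 1 else 0)" by (rule sum.swap)
  also have "\<dots> = (\<Sum>h\<in>C. N)" using step by simp
  also have "N = (\<Sum>m\<in>C. \<Sum>g\<in>C. if g \<otimes> cj m g = z then 1 else (0::complex))" unfolding N_def by (rule sum.swap)
  also have "\<dots> = (\<Sum>m\<in>C. \<Sum>a\<in>C. if a \<otimes> inv m \<otimes> cj m (a \<otimes> inv m) = z then 1 else (0::complex))"
  proof (rule sum.cong[OF refl])
    fix m assume m: "m \<in> C"
    show "(\<Sum>g\<in>C. if g \<otimes> cj m g = z then 1 else (0::complex)) = (\<Sum>a\<in>C. if a \<otimes> inv m \<otimes> cj m (a \<otimes> inv m) = z then 1 else 0)"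
      by (rule sum_rmult[OF inv_closed[OF m], of "\<lambda>g. if g \<otimes> cj m g = z then 1 else (0::complex)", symmetric])
  qed
  also have "\<dots> = (\<Sum>m\<in>C. \<Sum>a\<in>C. if a \<otimes> a \<otimes> (inv m \<otimes> inv m) = z then 1 else (0::complex))"
  proof (intro sum.cong refl)
    fix m a assume m: "m \<in> C" and a: "a \<in> C"
    have "a \<otimes> inv m \<otimes> cj m (a \<otimes> inv m) = a \<otimes> a \<otimes> (inv m \<otimes> inv m)"
      using m a by (simp add: cj_def m_assoc)
    then show "(if a \<otimes> inv m \<otimes> cj m (a \<otimes> inv m) = z then 1 else (0::complex)) = (if a \<otimes> a \<otimes> (inv m \<otimes> inv m) = z then 1 else 0)"
      by simp
  qed
  also have "\<dots> = (\<Sum>m\<in>C. \<Sum>a\<in>C. if a \<otimes> a \<otimes> (m \<otimes> m) = z then 1 else (0::complex))"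
    using sum_inv[of "\<lambda>m. \<Sum>a\<in>C. if a \<otimes> a \<otimes> (m \<otimes> m) = z then 1 else (0::complex)"] by simp
  also have "\<dots> = conv G Uf Uf z" unfolding conv_UU_aux[OF z] by (rule sum.swap)
  finally show ?thesis by simp
qed

end

context fgrp begin

lemma swap4: "(\<Sum>a\<in>A. \<Sum>b\<in>B. \<Sum>c\<in>CC. \<Sum>d\<in>D. (f a b c d :: complex)) = (\<Sum>c\<in>CC. \<Sum>d\<in>D. \<Sum>a\<in>A. \<Sum>b\<in>B. f a b c d)"
proof -
  have "(\<Sum>a\<in>A. \<Sum>b\<in>B. \<Sum>c\<in>CC. \<Sum>d\<in>D. f a b c d) = (\<Sum>a\<in>A. \<Sum>c\<in>CC. \<Sum>b\<in>B. \<Sum>d\<in>D. f a b c d)"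
    by (intro sum.cong refl sum.swap)
  also have "\<dots> = (\<Sum>a\<in>A. \<Sum>c\<in>CC. \<Sum>d\<in>D. \<Sum>b\<in>B. f a b c d)"
    by (intro sum.cong refl sum.swap)
  also have "\<dots> = (\<Sum>c\<in>CC. \<Sum>a\<in>A. \<Sum>d\<in>D. \<Sum>b\<in>B. f a b c d)" by (rule sum.swap)
  also have "\<dots> = (\<Sum>c\<in>CC. \<Sum>d\<in>D. \<Sum>a\<in>A. \<Sum>b\<in>B. f a b c d)"
    by (intro sum.cong refl sum.swap)
  finally show ?thesis .
qed

lemma if_sum_pull: "(if P then (\<Sum>h\<in>B. f h) else (0::complex)) = (\<Sum>h\<in>B. if P then f h else 0)"
  by simp

lemma ecl_mmul_left: assumes x: "x \<in> C" and y: "y \<in> C"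
  shows "mmul G (ecl x y) b u w = (\<Sum>h\<in>C. if u = cj h x then b (cj h y) w else 0)"
proof -
  have "mmul G (ecl x y) b u w = (\<Sum>v\<in>C. \<Sum>h\<in>C. if u = cj h x \<and> v = cj h y then b v w else 0)"
    by (simp add: mmul_def ecl_def sum_distrib_right if_distrib[of "\<lambda>t. t * _"] cong: if_cong)
  also have "\<dots> = (\<Sum>h\<in>C. \<Sum>v\<in>C. if u = cj h x \<and> v = cj h y then b v w else 0)" by (rule sum.swap)
  also have "\<dots> = (\<Sum>h\<in>C. if u = cj h x then b (cj h y) w else 0)"
  proof (intro sum.cong refl)
    fix h assume h: "h \<in> C"
    have "(\<Sum>v\<in>C. if u = cj h x \<and> v = cj h y then b v w else 0) = (\<Sum>v\<in>C. if v = cj h y then (if u = cj h x then b v w else 0) else 0)"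
      by (intro sum.cong refl) auto
    also have "\<dots> = (if u = cj h x then b (cj h y) w else 0)" using h y by (simp add: delta_sum)
    finally show "(\<Sum>v\<in>C. if u = cj h x \<and> v = cj h y then b v w else 0) = (if u = cj h x then b (cj h y) w else 0)" .
  qed
  finally show ?thesis .
qed

lemma ecl_mmul_right: assumes p: "p \<in> C" and q: "q \<in> C"
  shows "mmul G b (ecl p q) w s = (\<Sum>k\<in>C. if s = cj k q then b w (cj k p) else 0)"
proof -
  have "mmul G b (ecl p q) w s = (\<Sum>v\<in>C. \<Sum>k\<in>C. if v = cj k p \<and> s = cj k q then b w v else 0)"
    by (simp add: mmul_def ecl_def sum_distrib_left if_distrib[of "\<lambda>t. _ * t"] cong: if_cong)
  also have "\<dots> = (\<Sum>k\<in>C. \<Sum>v\<in>C. if v = cj k p \<and> s = cj k q then b w v else 0)" by (rule sum.swap)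
  also have "\<dots> = (\<Sum>k\<in>C. if s = cj k q then b w (cj k p) else 0)"
  proof (intro sum.cong refl)
    fix k assume k: "k \<in> C"
    have "(\<Sum>v\<in>C. if v = cj k p \<and> s = cj k q then b w v else 0) = (\<Sum>v\<in>C. if v = cj k p then (if s = cj k q then b w v else 0) else 0)"
      by (intro sum.cong refl) auto
    also have "\<dots> = (if s = cj k q then b w (cj k p) else 0)" using k p by (simp add: delta_sum)
    finally show "(\<Sum>v\<in>C. if v = cj k p \<and> s = cj k q then b w v else 0) = (if s = cj k q then b w (cj k p) else 0)" .
  qed
  finally show ?thesis .
qed

lemma tr_mmul: "tr (mmul G M b) = (\<Sum>u\<in>C. \<Sum>s\<in>C. M u s * b s u)"
  by (simp add: tr_def mmul_def)

lemma tr4: assumes x: "x \<in> C" and y: "y \<in> C"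
  shows "tr (mmul G (mmul G (mmul G (ecl x y) b1) (ecl y x)) b2)
       = (\<Sum>h\<in>C. \<Sum>k\<in>C. b1 (cj h y) (cj k y) * b2 (cj k x) (cj h x))"
proof -
  have M: "mmul G (mmul G (ecl x y) b1) (ecl y x) u s
      = (\<Sum>h\<in>C. \<Sum>k\<in>C. if u = cj h x \<and> s = cj k x then b1 (cj h y) (cj k y) else 0)" for u s
  proof -
    have "mmul G (mmul G (ecl x y) b1) (ecl y x) u s = (\<Sum>k\<in>C. if s = cj k x then (\<Sum>h\<in>C. if u = cj h x then b1 (cj h y) (cj k y) else 0) else 0)"
      by (simp only: ecl_mmul_right[OF y x] ecl_mmul_left[OF x y])
    also have "\<dots> = (\<Sum>k\<in>C. \<Sum>h\<in>C. if u = cj h x \<and> s = cj k x then b1 (cj h y) (cj k y) else 0)"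
      by (intro sum.cong refl) (simp add: if_sum_pull, intro sum.cong refl, auto)
    also have "\<dots> = (\<Sum>h\<in>C. \<Sum>k\<in>C. if u = cj h x \<and> s = cj k x then b1 (cj h y) (cj k y) else 0)"
      by (rule sum.swap)
    finally show ?thesis .
  qed
  have "tr (mmul G (mmul G (mmul G (ecl x y) b1) (ecl y x)) b2)
      = (\<Sum>u\<in>C. \<Sum>s\<in>C. \<Sum>h\<in>C. \<Sum>k\<in>C. if u = cj h x \<and> s = cj k x then b1 (cj h y) (cj k y) * b2 s u else 0)"
    unfolding tr_mmul M by (simp add: sum_distrib_right if_distrib[of "\<lambda>t. t * _"] cong: if_cong)
  also have "\<dots> = (\<Sum>h\<in>C. \<Sum>k\<in>C. \<Sum>u\<in>C. \<Sum>s\<in>C. if u = cj h x \<and> s = cj k x then b1 (cj h y) (cj k y) * b2 s u else 0)"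
    by (rule swap4)
  also have "\<dots> = (\<Sum>h\<in>C. \<Sum>k\<in>C. b1 (cj h y) (cj k y) * b2 (cj k x) (cj h x))"
  proof (intro sum.cong refl)
    fix h k assume h: "h \<in> C" and k: "k \<in> C"
    show "(\<Sum>u\<in>C. \<Sum>s\<in>C. if u = cj h x \<and> s = cj k x then b1 (cj h y) (cj k y) * b2 s u else 0) =
          b1 (cj h y) (cj k y) * b2 (cj k x) (cj h x)"
      using delta2[OF fin, of "cj h x" "cj k x" "\<lambda>u s. b1 (cj h y) (cj k y) * b2 s u"] h k x by simp
  qed
  finally show ?thesis .
qed

lemma tr7: assumes x: "x \<in> C" and y: "y \<in> C"
  shows "tr (mmul G (mmul G (ecl x y) (ecl x y)) b)
       = (\<Sum>h\<in>C. \<Sum>k\<in>C. if cj h y = cj k x then b (cj k y) (cj h x) else 0)"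
proof -
  have M: "mmul G (ecl x y) (ecl x y) u s
      = (\<Sum>h\<in>C. \<Sum>k\<in>C. if u = cj h x \<and> s = cj k y then (if cj h y = cj k x then 1 else 0) else 0)" for u s
  proof -
    have "mmul G (ecl x y) (ecl x y) u s = (\<Sum>h\<in>C. if u = cj h x then ecl x y (cj h y) s else 0)"
      using x y by (simp add: ecl_mmul_left)
    also have "\<dots> = (\<Sum>h\<in>C. \<Sum>k\<in>C. if u = cj h x \<and> s = cj k y then (if cj h y = cj k x then 1 else 0) else 0)"
    proof (intro sum.cong refl)
      fix h assume h: "h \<in> C"
      show "(if u = cj h x then ecl x y (cj h y) s else 0) =
         (\<Sum>k\<in>C. if u = cj h x \<and> s = cj k y then (if cj h y = cj k x then 1 else 0) else 0)"
      proof (cases "u = cj h x")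
        case True
        have "(\<Sum>k\<in>C. if cj h y = cj k x \<and> s = cj k y then 1 else (0::complex)) =
              (\<Sum>k\<in>C. if u = cj h x \<and> s = cj k y then (if cj h y = cj k x then 1 else 0) else 0)"
          using True by (intro sum.cong refl) auto
        then show ?thesis using True by (simp add: ecl_def)
      qed simp
    qed
    finally show ?thesis .
  qed
  have "tr (mmul G (mmul G (ecl x y) (ecl x y)) b)
      = (\<Sum>u\<in>C. \<Sum>s\<in>C. \<Sum>h\<in>C. \<Sum>k\<in>C. if u = cj h x \<and> s = cj k y then (if cj h y = cj k x then b s u else 0) else 0)"
    unfolding tr_mmul M by (simp add: sum_distrib_right if_distrib[of "\<lambda>t. t * _"] cong: if_cong)
  also have "\<dots> = (\<Sum>h\<in>C. \<Sum>k\<in>C. \<Sum>u\<in>C. \<Sum>s\<in>C. if u = cj h x \<and> s = cj k y then (if cj h y = cj k x then b s u else 0) else 0)"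
    by (rule swap4)
  also have "\<dots> = (\<Sum>h\<in>C. \<Sum>k\<in>C. if cj h y = cj k x then b (cj k y) (cj h x) else 0)"
  proof (intro sum.cong refl)
    fix h k assume h: "h \<in> C" and k: "k \<in> C"
    show "(\<Sum>u\<in>C. \<Sum>s\<in>C. if u = cj h x \<and> s = cj k y then (if cj h y = cj k x then b s u else 0) else 0) =
          (if cj h y = cj k x then b (cj k y) (cj h x) else 0)"
      using delta2[OF fin, of "cj h x" "cj k y" "\<lambda>u s. if cj h y = cj k x then b s u else 0"] h k x y by simp
  qed
  finally show ?thesis .
qed

end

context fgrp begin

lemma multH_BB: "multH G (0, b1) (0, b2) = (0, mmul G b1 b2)"
  by (simp add: multH_def)

lemma sum_Xs_C: assumes "\<And>y. y \<in> C \<Longrightarrow> y \<notin> Xs \<Longrightarrow> f y = 0"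
  shows "(\<Sum>y\<in>Xs. f y) = (\<Sum>y\<in>C. f y)"
  using assms Xs_sub fin by (intro sum.mono_neutral_left) auto

lemma form_eA_B: assumes g: "g \<in> C" and b: "invm b"
  shows "formH G (eA g) (0, b) = (\<Sum>y\<in>C. b y (cj g y))"
proof -
  have S: "(\<Sum>y\<in>C. b (cj (inv (cj h g)) y) y) = (\<Sum>y\<in>C. b y (cj g y))" if h: "h \<in> C" for h
  proof -
    have "(\<Sum>y\<in>C. b (cj (inv (cj h g)) y) y) = (\<Sum>y\<in>C. b (cj (inv (cj h g)) (cj h y)) (cj h y))"
      using sum_cj[OF h, of "\<lambda>y. b (cj (inv (cj h g)) y) y"] by simp
    also have "\<dots> = (\<Sum>y\<in>C. b (cj (inv g) y) y)"
    proof (intro sum.cong refl)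
      fix y assume y: "y \<in> C"
      have "cj (inv (cj h g)) (cj h y) = cj h (cj (inv g) y)" using h g y by (simp add: cj_inv cj_cj_conj)
      then show "b (cj (inv (cj h g)) (cj h y)) (cj h y) = b (cj (inv g) y) y"
        using invm_inv[OF b h, of "cj (inv g) y" y] g y by simp
    qed
    also have "\<dots> = (\<Sum>y\<in>C. b (cj (inv g) (cj g y)) (cj g y))"
      using sum_cj[OF g, of "\<lambda>y. b (cj (inv g) y) y"] by simp
    also have "\<dots> = (\<Sum>y\<in>C. b y (cj g y))" using g by simp
    finally show ?thesis .
  qed
  have "tr (mmul G (Vmat G (clsf g)) b) = (\<Sum>y\<in>C. \<Sum>m\<in>C. \<Sum>h\<in>C. if m = cj h g then b (cj (inv m) y) y else 0)"
    by (simp add: tr_def VB_left clsf_def sum_distrib_right if_distrib[of "\<lambda>t. t * _"] cong: if_cong)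
  also have "\<dots> = (\<Sum>y\<in>C. \<Sum>h\<in>C. \<Sum>m\<in>C. if m = cj h g then b (cj (inv m) y) y else 0)"
    by (intro sum.cong refl sum.swap)
  also have "\<dots> = (\<Sum>y\<in>C. \<Sum>h\<in>C. b (cj (inv (cj h g)) y) y)"
    using g by (intro sum.cong refl) (simp add: delta_sum)
  also have "\<dots> = (\<Sum>h\<in>C. \<Sum>y\<in>C. b (cj (inv (cj h g)) y) y)" by (rule sum.swap)
  also have "\<dots> = (\<Sum>h\<in>C. \<Sum>y\<in>C. b y (cj g y))" using S by simp
  finally show ?thesis using nn_nz by (simp add: eA_def formH_AB)
qed

lemma form_eA_B_inv: assumes g: "g \<in> C" and b: "invm b"
  shows "formH G (eA (inv g)) (0, b) = (\<Sum>y\<in>C. b (cj g y) y)"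
proof -
  have "formH G (eA (inv g)) (0, b) = (\<Sum>y\<in>C. b y (cj (inv g) y))" using form_eA_B[OF inv_closed[OF g] b] .
  also have "\<dots> = (\<Sum>y\<in>C. b (cj g y) (cj (inv g) (cj g y)))"
    using sum_cj[OF g, of "\<lambda>y. b y (cj (inv g) y)"] by simp
  also have "\<dots> = (\<Sum>y\<in>C. b (cj g y) y)" using g by simp
  finally show ?thesis .
qed

lemma comp4: assumes b1: "invm b1" and b2: "invm b2"
  shows "(\<Sum>p\<in>Xs \<times> Xs. formH G (multH G (multH G (eB p) (0, b1)) (eB (snd p, fst p))) (0, b2) / nn)
       = (\<Sum>g\<in>C. formH G (eA g) (0, b1) * formH G (eA (inv g)) (0, b2) / nn)"
proof -
  have T: "formH G (multH G (multH G (eB (x, y)) (0, b1)) (eB (y, x))) (0, b2)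
      = (\<Sum>m\<in>C. b1 y (cj m y) * b2 (cj m x) x)" if x: "x \<in> Xs" and y: "y \<in> Xs" for x y
  proof -
    have xC: "x \<in> C" "y \<in> C" using x y Xs_sub by auto
    have "(\<Sum>h\<in>C. \<Sum>k\<in>C. b1 (cj h y) (cj k y) * b2 (cj k x) (cj h x))
        = (\<Sum>h\<in>C. \<Sum>k\<in>C. b1 y (cj (inv h \<otimes> k) y) * b2 (cj (inv h \<otimes> k) x) x)"
    proof (intro sum.cong refl)
      fix h k assume h: "h \<in> C" and k: "k \<in> C"
      have "b1 (cj h y) (cj k y) = b1 (cj (inv h) (cj h y)) (cj (inv h) (cj k y))"
        using invm_inv[OF b1 inv_closed[OF h], of "cj h y" "cj k y"] h k xC by simp
      also have "\<dots> = b1 y (cj (inv h \<otimes> k) y)" using h k xC by (simp add: cj_cj)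
      finally have e1: "b1 (cj h y) (cj k y) = b1 y (cj (inv h \<otimes> k) y)" .
      have "b2 (cj k x) (cj h x) = b2 (cj (inv h) (cj k x)) (cj (inv h) (cj h x))"
        using invm_inv[OF b2 inv_closed[OF h], of "cj k x" "cj h x"] h k xC by simp
      also have "\<dots> = b2 (cj (inv h \<otimes> k) x) x" using h k xC by (simp add: cj_cj)
      finally have e2: "b2 (cj k x) (cj h x) = b2 (cj (inv h \<otimes> k) x) x" .
      show "b1 (cj h y) (cj k y) * b2 (cj k x) (cj h x) = b1 y (cj (inv h \<otimes> k) y) * b2 (cj (inv h \<otimes> k) x) x"
        using e1 e2 by simp
    qed
    also have "\<dots> = (\<Sum>h\<in>C. \<Sum>m\<in>C. b1 y (cj m y) * b2 (cj m x) x)"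
    proof (rule sum.cong[OF refl])
      fix h assume h: "h \<in> C"
      have "(\<Sum>k\<in>C. b1 y (cj (inv h \<otimes> k) y) * b2 (cj (inv h \<otimes> k) x) x)
          = (\<Sum>m\<in>C. b1 y (cj (inv h \<otimes> (h \<otimes> m)) y) * b2 (cj (inv h \<otimes> (h \<otimes> m)) x) x)"
        by (rule sum_lmult[OF h, of "\<lambda>k. b1 y (cj (inv h \<otimes> k) y) * b2 (cj (inv h \<otimes> k) x) x", symmetric])
      also have "\<dots> = (\<Sum>m\<in>C. b1 y (cj m y) * b2 (cj m x) x)" using h by (intro sum.cong refl) simp
      finally show "(\<Sum>k\<in>C. b1 y (cj (inv h \<otimes> k) y) * b2 (cj (inv h \<otimes> k) x) x) = (\<Sum>m\<in>C. b1 y (cj m y) * b2 (cj m x) x)" .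
    qed
    also have "\<dots> = nn * (\<Sum>m\<in>C. b1 y (cj m y) * b2 (cj m x) x)" by simp
    finally have "tr (mmul G (mmul G (mmul G (ecl x y) b1) (ecl y x)) b2) = nn * (\<Sum>m\<in>C. b1 y (cj m y) * b2 (cj m x) x)"
      using tr4[OF xC] by simp
    then show ?thesis using nn_nz by (simp add: eB_def multH_BB formH_B)
  qed
  have "(\<Sum>p\<in>Xs \<times> Xs. formH G (multH G (multH G (eB p) (0, b1)) (eB (snd p, fst p))) (0, b2) / nn)
      = (\<Sum>x\<in>Xs. \<Sum>y\<in>Xs. formH G (multH G (multH G (eB (x, y)) (0, b1)) (eB (y, x))) (0, b2) / nn)"
    by (simp add: sum.cartesian_product split_def)
  also have "\<dots> = (\<Sum>x\<in>Xs. \<Sum>y\<in>Xs. \<Sum>m\<in>C. b1 y (cj m y) * b2 (cj m x) x / nn)"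
    using T by (simp add: sum_divide_distrib)
  also have "\<dots> = (\<Sum>m\<in>C. \<Sum>x\<in>Xs. \<Sum>y\<in>Xs. b1 y (cj m y) * b2 (cj m x) x / nn)"
  proof -
    have "(\<Sum>x\<in>Xs. \<Sum>y\<in>Xs. \<Sum>m\<in>C. b1 y (cj m y) * b2 (cj m x) x / nn) = (\<Sum>x\<in>Xs. \<Sum>m\<in>C. \<Sum>y\<in>Xs. b1 y (cj m y) * b2 (cj m x) x / nn)"
      by (intro sum.cong refl sum.swap)
    also have "\<dots> = (\<Sum>m\<in>C. \<Sum>x\<in>Xs. \<Sum>y\<in>Xs. b1 y (cj m y) * b2 (cj m x) x / nn)" by (rule sum.swap)
    finally show ?thesis .
  qed
  also have "\<dots> = (\<Sum>m\<in>C. (\<Sum>y\<in>Xs. b1 y (cj m y)) * (\<Sum>x\<in>Xs. b2 (cj m x) x) / nn)"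
    by (intro sum.cong refl) (simp add: sum_product sum_divide_distrib mult.commute, rule sum.swap)
  also have "\<dots> = (\<Sum>m\<in>C. (\<Sum>y\<in>C. b1 y (cj m y)) * (\<Sum>x\<in>C. b2 (cj m x) x) / nn)"
  proof (intro sum.cong refl)
    fix m assume m: "m \<in> C"
    have "(\<Sum>y\<in>Xs. b1 y (cj m y)) = (\<Sum>y\<in>C. b1 y (cj m y))"
      by (rule sum_Xs_C) (use invm_supp[OF b1] in blast)
    moreover have "(\<Sum>x\<in>Xs. b2 (cj m x) x) = (\<Sum>x\<in>C. b2 (cj m x) x)"
      by (rule sum_Xs_C) (use invm_supp[OF b2] in blast)
    ultimately show "(\<Sum>y\<in>Xs. b1 y (cj m y)) * (\<Sum>x\<in>Xs. b2 (cj m x) x) / nn = (\<Sum>y\<in>C. b1 y (cj m y)) * (\<Sum>x\<in>C. b2 (cj m x) x) / nn"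
      by simp
  qed
  also have "\<dots> = (\<Sum>g\<in>C. formH G (eA g) (0, b1) * formH G (eA (inv g)) (0, b2) / nn)"
    by (intro sum.cong refl) (simp add: form_eA_B[OF _ b1] form_eA_B_inv[OF _ b2])
  finally show ?thesis .
qed

end

context fgrp begin

lemma starH_eB: "starH G (eB (y, x)) = eB (x, y)"
  by (simp add: starH_eq eB_def sta_def ecl_def fun_eq_iff conj_commute)

lemma form_U_B: assumes b: "invm b"
  shows "formH G (Uf, 0) (0, b) = (\<Sum>m\<in>C. \<Sum>x\<in>C. b (cj (m \<otimes> m) x) x) / nn"
proof -
  have "tr (mmul G (Vmat G Uf) b) = (\<Sum>y\<in>C. \<Sum>a\<in>C. \<Sum>c\<in>C. if a = c \<otimes> c then b (cj (inv a) y) y else 0)"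
    by (simp add: tr_def VB_left Uf_def sum_distrib_right if_distrib[of "\<lambda>t. t * _"] eq_commute[of "_ \<otimes> _"] cong: if_cong)
  also have "\<dots> = (\<Sum>y\<in>C. \<Sum>c\<in>C. \<Sum>a\<in>C. if a = c \<otimes> c then b (cj (inv a) y) y else 0)"
    by (intro sum.cong refl sum.swap)
  also have "\<dots> = (\<Sum>y\<in>C. \<Sum>c\<in>C. b (cj (inv (c \<otimes> c)) y) y)"
    by (intro sum.cong refl) (simp add: delta_sum)
  also have "\<dots> = (\<Sum>c\<in>C. \<Sum>y\<in>C. b (cj (inv (c \<otimes> c)) y) y)" by (rule sum.swap)
  also have "\<dots> = (\<Sum>c\<in>C. \<Sum>y\<in>C. b (cj (inv (inv c \<otimes> inv c)) y) y)"
    using sum_inv[of "\<lambda>c. \<Sum>y\<in>C. b (cj (inv (c \<otimes> c)) y) y"] by simp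
  also have "\<dots> = (\<Sum>c\<in>C. \<Sum>y\<in>C. b (cj (c \<otimes> c) y) y)"
    by (intro sum.cong refl) (simp add: inv_mult_group)
  finally show ?thesis by (simp add: formH_AB)
qed

lemma comp7: assumes b: "invm b"
  shows "(\<Sum>p\<in>Xs \<times> Xs. formH G (multH G (eB p) (starH G (eB (snd p, fst p)))) (0, b) / nn)
       = formH G (Uf, 0) (0, b)"
proof -
  have inner: "(\<Sum>x\<in>Xs. \<Sum>y\<in>Xs. if cj h y = cj k x then b (cj k y) (cj h x) else 0)
      = (\<Sum>x\<in>Xs. b (cj ((inv h \<otimes> k) \<otimes> (inv h \<otimes> k)) x) x)" if h: "h \<in> C" and k: "k \<in> C" for h k
  proof (intro sum.cong refl)
    fix x assume x: "x \<in> Xs"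
    have xC: "x \<in> C" using x Xs_sub by auto
    let ?y = "cj (inv h \<otimes> k) x"
    have yX: "?y \<in> Xs" using Xs_cj h k xC x by simp
    have "(\<Sum>y\<in>Xs. if cj h y = cj k x then b (cj k y) (cj h x) else 0) = (\<Sum>y\<in>Xs. if y = ?y then b (cj k y) (cj h x) else 0)"
    proof (intro sum.cong refl)
      fix y assume y: "y \<in> Xs"
      have yC: "y \<in> C" using y Xs_sub by auto
      have e1: "(cj k x = cj h y) = (y = cj (inv h) (cj k x))"
        using cj_eq_iff[OF h cj_closed[OF k xC] yC] .
      have e2: "cj (inv h) (cj k x) = ?y" using h k xC by (simp add: cj_cj)
      have "(cj h y = cj k x) = (y = ?y)" using e1 e2 by auto
      then show "(if cj h y = cj k x then b (cj k y) (cj h x) else 0) = (if y = ?y then b (cj k y) (cj h x) else 0)"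
        by simp
    qed
    also have "\<dots> = b (cj k ?y) (cj h x)" using yX Xs_finite by simp
    also have "\<dots> = b (cj (inv h) (cj k ?y)) (cj (inv h) (cj h x))"
      using invm_inv[OF b inv_closed[OF h], of "cj k ?y" "cj h x"] h k xC by simp
    also have "\<dots> = b (cj ((inv h \<otimes> k) \<otimes> (inv h \<otimes> k)) x) x"
      using h k xC by (simp add: cj_cj m_assoc)
    finally show "(\<Sum>y\<in>Xs. if cj h y = cj k x then b (cj k y) (cj h x) else 0) = b (cj ((inv h \<otimes> k) \<otimes> (inv h \<otimes> k)) x) x" .
  qed
  have "(\<Sum>p\<in>Xs \<times> Xs. formH G (multH G (eB p) (starH G (eB (snd p, fst p)))) (0, b) / nn)
      = (\<Sum>x\<in>Xs. \<Sum>y\<in>Xs. tr (mmul G (mmul G (ecl x y) (ecl x y)) b) / nn / nn)"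
    by (simp only: starH_eB prod.collapse) (simp add: sum.cartesian_product split_def eB_def multH_BB formH_B)
  also have "\<dots> = (\<Sum>x\<in>Xs. \<Sum>y\<in>Xs. \<Sum>h\<in>C. \<Sum>k\<in>C. (if cj h y = cj k x then b (cj k y) (cj h x) else 0) / nn / nn)"
  proof (intro sum.cong refl)
    fix x y assume x: "x \<in> Xs" and y: "y \<in> Xs"
    then have "x \<in> C" "y \<in> C" using Xs_sub by auto
    then show "tr (mmul G (mmul G (ecl x y) (ecl x y)) b) / nn / nn = (\<Sum>h\<in>C. \<Sum>k\<in>C. (if cj h y = cj k x then b (cj k y) (cj h x) else 0) / nn / nn)"
      by (simp add: tr7 sum_divide_distrib)
  qed
  also have "\<dots> = (\<Sum>h\<in>C. \<Sum>k\<in>C. \<Sum>x\<in>Xs. \<Sum>y\<in>Xs. (if cj h y = cj k x then b (cj k y) (cj h x) else 0) / nn / nn)"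
    by (rule swap4)
  also have "\<dots> = (\<Sum>h\<in>C. \<Sum>k\<in>C. (\<Sum>x\<in>Xs. b (cj ((inv h \<otimes> k) \<otimes> (inv h \<otimes> k)) x) x) / nn / nn)"
    by (intro sum.cong refl) (simp add: sum_divide_distrib[symmetric] inner)
  also have "\<dots> = (\<Sum>h\<in>C. \<Sum>m\<in>C. (\<Sum>x\<in>Xs. b (cj (m \<otimes> m) x) x) / nn / nn)"
  proof (rule sum.cong[OF refl])
    fix h assume h: "h \<in> C"
    have "(\<Sum>k\<in>C. (\<Sum>x\<in>Xs. b (cj ((inv h \<otimes> k) \<otimes> (inv h \<otimes> k)) x) x) / nn / nn)
       = (\<Sum>m\<in>C. (\<Sum>x\<in>Xs. b (cj ((inv h \<otimes> (h \<otimes> m)) \<otimes> (inv h \<otimes> (h \<otimes> m))) x) x) / nn / nn)"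
      by (rule sum_lmult[OF h, of "\<lambda>k. (\<Sum>x\<in>Xs. b (cj ((inv h \<otimes> k) \<otimes> (inv h \<otimes> k)) x) x) / nn / nn", symmetric])
    also have "\<dots> = (\<Sum>m\<in>C. (\<Sum>x\<in>Xs. b (cj (m \<otimes> m) x) x) / nn / nn)" using h by (intro sum.cong refl) simp
    finally show "(\<Sum>k\<in>C. (\<Sum>x\<in>Xs. b (cj ((inv h \<otimes> k) \<otimes> (inv h \<otimes> k)) x) x) / nn / nn) = (\<Sum>m\<in>C. (\<Sum>x\<in>Xs. b (cj (m \<otimes> m) x) x) / nn / nn)" .
  qed
  also have "\<dots> = nn * (\<Sum>m\<in>C. (\<Sum>x\<in>Xs. b (cj (m \<otimes> m) x) x) / nn / nn)" by simp
  also have "\<dots> = (\<Sum>m\<in>C. \<Sum>x\<in>Xs. b (cj (m \<otimes> m) x) x) / nn"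
    using nn_nz by (simp add: sum_divide_distrib[symmetric])
  also have "\<dots> = (\<Sum>m\<in>C. \<Sum>x\<in>C. b (cj (m \<otimes> m) x) x) / nn"
  proof -
    have "\<And>m. m \<in> C \<Longrightarrow> (\<Sum>x\<in>Xs. b (cj (m \<otimes> m) x) x) = (\<Sum>x\<in>C. b (cj (m \<otimes> m) x) x)"
      by (rule sum_Xs_C) (use invm_supp[OF b] in blast)
    then show ?thesis by simp
  qed
  also have "\<dots> = formH G (Uf, 0) (0, b)" using form_U_B[OF b] by simp
  finally show ?thesis .
qed

end

context fgrp begin

lemma cond8: assumes g: "g \<in> C" and x: "x \<in> C" and k: "k \<in> C" and z: "z \<in> C"
  shows "(g \<otimes> (inv (g \<otimes> x) \<otimes> inv (g \<otimes> x)) = cj (g \<otimes> x \<otimes> k) (inv z)) = (g \<otimes> (x \<otimes> x) = cj k z)"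
proof -
  define \<psi> where "\<psi> w = inv (cj (g \<otimes> x) w)" for w
  have gx: "g \<otimes> x \<in> C" using g x by simp
  have e1: "cj (g \<otimes> x \<otimes> k) (inv z) = \<psi> (cj k z)"
  proof -
    have "cj (g \<otimes> x \<otimes> k) (inv z) = cj (g \<otimes> x) (cj k (inv z))" using gx k z by (simp add: cj_cj)
    also have "\<dots> = \<psi> (cj k z)" using gx k z by (simp add: \<psi>_def cj_inv)
    finally show ?thesis .
  qed
  have p: "(g \<otimes> x) \<otimes> (g \<otimes> (x \<otimes> x)) \<otimes> inv (g \<otimes> x) = g \<otimes> (x \<otimes> (g \<otimes> (x \<otimes> inv g)))"
    using g x by (simp add: inv_mult_group m_assoc)
  have e2: "g \<otimes> (inv (g \<otimes> x) \<otimes> inv (g \<otimes> x)) = \<psi> (g \<otimes> (x \<otimes> x))"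
  proof -
    have "\<psi> (g \<otimes> (x \<otimes> x)) = inv (g \<otimes> (x \<otimes> (g \<otimes> (x \<otimes> inv g))))" using p by (simp add: \<psi>_def cj_def)
    also have "\<dots> = g \<otimes> (inv x \<otimes> (inv g \<otimes> (inv x \<otimes> inv g)))" using g x by (simp add: inv_mult_group m_assoc)
    also have "\<dots> = g \<otimes> (inv (g \<otimes> x) \<otimes> inv (g \<otimes> x))" using g x by (simp add: inv_mult_group m_assoc)
    finally show ?thesis by simp
  qed
  have inj: "(\<psi> u = \<psi> v) = (u = v)" if u: "u \<in> C" and v: "v \<in> C" for u v
  proof
    assume "\<psi> u = \<psi> v"
    then have "cj (g \<otimes> x) u = cj (g \<otimes> x) v" using gx u v unfolding \<psi>_def by (metis cj_closed inv_inv)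
    then show "u = v" using cj_inj[OF gx u v] by simp
  qed simp
  show ?thesis using e1 e2 inj[of "g \<otimes> (x \<otimes> x)" "cj k z"] g x k z by auto
qed

lemma conv_U_expand: "z \<in> C \<Longrightarrow> conv G a Uf z = (\<Sum>g\<in>C. \<Sum>x\<in>C. if g \<otimes> (x \<otimes> x) = z then a g else 0)"
proof -
  assume z: "z \<in> C"
  have "conv G a Uf z = (\<Sum>g\<in>C. \<Sum>x\<in>C. if x \<otimes> x = inv g \<otimes> z then a g else 0)"
    using z by (simp add: conv_in Uf_def sum_distrib_left if_distrib[of "\<lambda>t. _ * t"] cong: if_cong)
  also have "\<dots> = (\<Sum>g\<in>C. \<Sum>x\<in>C. if g \<otimes> (x \<otimes> x) = z then a g else 0)"
  proof (intro sum.cong refl)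
    fix g x assume g: "g \<in> C" and x: "x \<in> C"
    have "(x \<otimes> x = inv g \<otimes> z) = (g \<otimes> (x \<otimes> x) = z)"
      using g x z by (metis linv_cancel rinv_cancel m_closed inv_closed)
    then show "(if x \<otimes> x = inv g \<otimes> z then a g else 0) = (if g \<otimes> (x \<otimes> x) = z then a g else 0)" by simp
  qed
  finally show ?thesis .
qed

lemma comp8: assumes a: "classf a" shows "sta (conv G a Uf) = conv G a Uf"
proof (intro ext)
  fix z
  show "sta (conv G a Uf) z = conv G a Uf z"
  proof (cases "z \<in> C")
    case False then show ?thesis by (simp add: sta_def conv_out)
  next
    case True
    have cP: "classf (conv G a Uf)" using classf_conv[OF a classf_Uf] .
    define W where "W w = (\<Sum>g\<in>C. \<Sum>x\<in>C. \<Sum>k\<in>C. if g \<otimes> (x \<otimes> x) = cj k w then a g else 0)" for w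
    have WP: "W w = nn * conv G a Uf w" if w: "w \<in> C" for w
    proof -
      have "W w = (\<Sum>g\<in>C. \<Sum>k\<in>C. \<Sum>x\<in>C. if g \<otimes> (x \<otimes> x) = cj k w then a g else 0)"
        unfolding W_def by (intro sum.cong refl sum.swap)
      also have "\<dots> = (\<Sum>k\<in>C. \<Sum>g\<in>C. \<Sum>x\<in>C. if g \<otimes> (x \<otimes> x) = cj k w then a g else 0)" by (rule sum.swap)
      also have "\<dots> = (\<Sum>k\<in>C. conv G a Uf (cj k w))" using w by (simp add: conv_U_expand)
      also have "\<dots> = (\<Sum>k\<in>C. conv G a Uf w)" using cP w by (simp add: classf_def)
      finally show ?thesis by simp
    qed
    have WW: "W (inv z) = W z"
      unfolding W_def
    proof (rule sum.cong[OF refl])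
      fix g assume g: "g \<in> C"
      have "(\<Sum>x\<in>C. \<Sum>k\<in>C. if g \<otimes> (x \<otimes> x) = cj k (inv z) then a g else 0)
          = (\<Sum>x\<in>C. \<Sum>k\<in>C. if g \<otimes> (x \<otimes> x) = cj (inv x \<otimes> k) (inv z) then a g else 0)"
      proof (rule sum.cong[OF refl])
        fix x assume x: "x \<in> C"
        show "(\<Sum>k\<in>C. if g \<otimes> (x \<otimes> x) = cj k (inv z) then a g else 0) = (\<Sum>k\<in>C. if g \<otimes> (x \<otimes> x) = cj (inv x \<otimes> k) (inv z) then a g else 0)"
          by (rule sum_lmult[OF inv_closed[OF x], of "\<lambda>k. if g \<otimes> (x \<otimes> x) = cj k (inv z) then a g else 0", symmetric])
      qed
      also have "\<dots> = (\<Sum>x\<in>C. \<Sum>k\<in>C. if g \<otimes> (inv (g \<otimes> x) \<otimes> inv (g \<otimes> x)) = cj (inv (inv (g \<otimes> x)) \<otimes> k) (inv z) then a g else 0)"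
      proof -
        let ?H = "\<lambda>x. \<Sum>k\<in>C. if g \<otimes> (x \<otimes> x) = cj (inv x \<otimes> k) (inv z) then a g else 0"
        have "sum ?H C = (\<Sum>x\<in>C. ?H (inv x))" using sum_inv[of ?H] by simp
        also have "\<dots> = (\<Sum>x\<in>C. ?H (inv (g \<otimes> x)))" using sum_lmult[OF g, of "\<lambda>x. ?H (inv x)"] by simp
        finally show ?thesis .
      qed
      also have "\<dots> = (\<Sum>x\<in>C. \<Sum>k\<in>C. if g \<otimes> (x \<otimes> x) = cj k z then a g else 0)"
      proof (intro sum.cong refl)
        fix x k assume x: "x \<in> C" and k: "k \<in> C"
        have "inv (inv (g \<otimes> x)) = g \<otimes> x" using g x by simp
        then show "(if g \<otimes> (inv (g \<otimes> x) \<otimes> inv (g \<otimes> x)) = cj (inv (inv (g \<otimes> x)) \<otimes> k) (inv z) then a g else 0)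
            = (if g \<otimes> (x \<otimes> x) = cj k z then a g else 0)"
          using cond8[OF g x k True] by simp
      qed
      finally show "(\<Sum>x\<in>C. \<Sum>k\<in>C. if g \<otimes> (x \<otimes> x) = cj k (inv z) then a g else 0) = (\<Sum>x\<in>C. \<Sum>k\<in>C. if g \<otimes> (x \<otimes> x) = cj k z then a g else 0)" .
    qed
    have "nn * conv G a Uf (inv z) = nn * conv G a Uf z" using WP WW True by (metis inv_closed)
    then have "conv G a Uf (inv z) = conv G a Uf z" using nn_nz by simp
    then show ?thesis using True by (simp add: sta_def)
  qed
qed

end

context fgrp begin

lemma bilin_formH: "bilin scaleH (formH G)"
  by (simp add: bilin_def formH_add_left formH_add_right formH_scale_left formH_scale_right)

lemma bil_HA: "bil scaleH (formH G) X"
  by (simp add: bil_def bil_axioms_def vs_scaleH bilin_formH formH_sym[of _ _])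

lemma formH_zero_left: "formH G 0 y = 0"
  using formH_add_left[of 0 0 y] by simp

lemma formH_sum_left: "formH G (\<Sum>a\<in>A. x a) y = (\<Sum>a\<in>A. formH G (x a) y)"
  by (induct A rule: infinite_finite_induct) (auto simp: formH_zero_left formH_add_left)

lemma formH_diff: "formH G (x - y) z = formH G x z - formH G y z"
  using formH_add_left[of "x - y" y z] by simp

lemma bilin_4A: "bilin scaleH (\<lambda>p q. formH G p b1 * formH G q b2)"
  by (simp add: bilin_def formH_add_left formH_scale_left algebra_simps)

lemma bilin_4B: "bilin scaleH (\<lambda>p q. formH G (multH G (multH G p b1) q) b2)"
  by (simp add: bilin_def formH_add_left formH_scale_left multH_add_left multH_add_right
      multH_scale_left multH_scale_right)

lemma bilin_67: "bilin scaleH (\<lambda>p q. formH G (multH G p (starH G q)) y)"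
  by (simp add: bilin_def formH_add_left formH_scale_left multH_add_left multH_add_right
      multH_scale_left multH_scale_right starH_add starH_scale)

lemma EA_delta: "(\<Sum>g\<in>C. \<Sum>k\<in>C. EA g k * \<Psi> g k) = (\<Sum>g\<in>C. \<Psi> g (inv g) / nn)"
proof (intro sum.cong refl)
  fix g assume g: "g \<in> C"
  have "(\<Sum>k\<in>C. EA g k * \<Psi> g k) = (\<Sum>k\<in>C. if k = inv g then \<Psi> g k / nn else 0)"
    by (intro sum.cong refl) (simp add: EA_def)
  also have "\<dots> = \<Psi> g (inv g) / nn" using g by (simp add: delta_sum)
  finally show "(\<Sum>k\<in>C. EA g k * \<Psi> g k) = \<Psi> g (inv g) / nn" .
qed

lemma EB_delta: "(\<Sum>p\<in>Xs \<times> Xs. \<Sum>q\<in>Xs \<times> Xs. EB p q * \<Psi> p q) = (\<Sum>p\<in>Xs \<times> Xs. \<Psi> p (snd p, fst p) / nn)"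
proof (intro sum.cong refl)
  fix p assume p: "p \<in> Xs \<times> Xs"
  have "(\<Sum>q\<in>Xs \<times> Xs. EB p q * \<Psi> p q) = (\<Sum>q\<in>Xs \<times> Xs. if q = (snd p, fst p) then \<Psi> p q / nn else 0)"
    by (intro sum.cong refl) (simp add: EB_def)
  also have "\<dots> = \<Psi> p (snd p, fst p) / nn" using p Xs_finite by (auto simp: mem_Times_iff)
  finally show "(\<Sum>q\<in>Xs \<times> Xs. EB p q * \<Psi> p q) = \<Psi> p (snd p, fst p) / nn" .
qed

lemma changeA:
  assumes B: "basis_invgram scaleH (formH G) (HA G) n f F" and P: "bilin scaleH \<Phi>"
  shows "(\<Sum>i<n. \<Sum>j<n. F i j * \<Phi> (f i) (f j)) = (\<Sum>g\<in>C. \<Phi> (eA g) (eA (inv g)) / nn)"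
proof -
  interpret bil scaleH "formH G" "HA G" by (rule bil_HA)
  have "(\<Sum>i<n. \<Sum>j<n. F i j * \<Phi> (f i) (f j)) = (\<Sum>g\<in>C. \<Sum>k\<in>C. EA g k * \<Phi> (eA g) (eA k))"
    by (rule frame_change[OF B fin eA_in frameA P])
  also have "\<dots> = (\<Sum>g\<in>C. \<Phi> (eA g) (eA (inv g)) / nn)" by (rule EA_delta)
  finally show ?thesis .
qed

lemma changeB:
  assumes B: "basis_invgram scaleH (formH G) (HB G) n f F" and P: "bilin scaleH \<Phi>"
  shows "(\<Sum>i<n. \<Sum>j<n. F i j * \<Phi> (f i) (f j)) = (\<Sum>p\<in>Xs \<times> Xs. \<Phi> (eB p) (eB (snd p, fst p)) / nn)"
proof -
  interpret bil scaleH "formH G" "HB G" by (rule bil_HA)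
  have fX: "finite (Xs \<times> Xs)" using Xs_finite by simp
  have "(\<Sum>i<n. \<Sum>j<n. F i j * \<Phi> (f i) (f j)) = (\<Sum>p\<in>Xs \<times> Xs. \<Sum>q\<in>Xs \<times> Xs. EB p q * \<Phi> (eB p) (eB q))"
    by (rule frame_change[OF B fX eB_in frameB P])
  also have "\<dots> = (\<Sum>p\<in>Xs \<times> Xs. \<Phi> (eB p) (eB (snd p, fst p)) / nn)" by (rule EB_delta)
  finally show ?thesis .
qed

lemma VK_form: "formH G (V_K scaleH (multH G) m g Gm b1) b2 = (\<Sum>k<m. \<Sum>l<m. Gm k l * formH G (multH G (multH G (g k) b1) (g l)) b2)"
  by (simp add: V_K_def formH_sum_left formH_scale_left)

lemma Kstar_form: "formH G (K_star scaleH (multH G) (starH G) n f F) y = (\<Sum>i<n. \<Sum>j<n. F i j * formH G (multH G (f i) (starH G (f j))) y)"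
  by (simp add: K_star_def formH_sum_left formH_scale_left)

lemma cond4: assumes BA: "basis_invgram scaleH (formH G) (HA G) n f F"
  and BB: "basis_invgram scaleH (formH G) (HB G) m g Gm" and b1: "b1 \<in> HB G" and b2: "b2 \<in> HB G"
  shows "formH G (V_K scaleH (multH G) m g Gm b1) b2 = (\<Sum>i<n. \<Sum>j<n. F i j * formH G (f i) b1 * formH G (f j) b2)"
proof -
  obtain \<beta>1 where e1: "b1 = (0, \<beta>1)" and i1: "invm \<beta>1" using b1 by (cases b1) (auto simp: HB_eq)
  obtain \<beta>2 where e2: "b2 = (0, \<beta>2)" and i2: "invm \<beta>2" using b2 by (cases b2) (auto simp: HB_eq)
  have "formH G (V_K scaleH (multH G) m g Gm b1) b2 = (\<Sum>k<m. \<Sum>l<m. Gm k l * formH G (multH G (multH G (g k) b1) (g l)) b2)"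
    by (rule VK_form)
  also have "\<dots> = (\<Sum>p\<in>Xs \<times> Xs. formH G (multH G (multH G (eB p) b1) (eB (snd p, fst p))) b2 / nn)"
    by (rule changeB[OF BB bilin_4B])
  also have "\<dots> = (\<Sum>g\<in>C. formH G (eA g) b1 * formH G (eA (inv g)) b2 / nn)"
    unfolding e1 e2 by (rule comp4[OF i1 i2])
  also have "\<dots> = (\<Sum>i<n. \<Sum>j<n. F i j * (formH G (f i) b1 * formH G (f j) b2))"
    by (rule changeA[OF BA bilin_4A, symmetric])
  finally show ?thesis by (simp add: mult.assoc)
qed

end

context fgrp begin

lemma lam0: "(\<lambda>u v. (0::complex)) = 0" by (simp add: fun_eq_iff)

lemma multH_A: "x \<in> HA G \<Longrightarrow> y \<in> HA G \<Longrightarrow> multH G x y = (conv G (fst x) (fst y), 0)"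
  by (auto simp: HA_eq multH_def)

lemma multH_A_in: "x \<in> HA G \<Longrightarrow> y \<in> HA G \<Longrightarrow> multH G x y \<in> HA G"
  using multH_A[of x y] by (auto simp: HA_eq classf_conv)

lemma starH_A: "x \<in> HA G \<Longrightarrow> starH G x \<in> HA G"
  by (auto simp: HA_eq starH_eq classf_sta fun_eq_iff)

lemma starH_B: "x \<in> HB G \<Longrightarrow> starH G x \<in> HB G"
  by (auto simp: HB_eq starH_eq invm_T fun_eq_iff sta_def)

lemma HA_Hset: "HA G \<subseteq> Hset" by (auto simp: HA_eq Hset_def invm_zero)
lemma HB_Hset: "HB G \<subseteq> Hset" by (auto simp: HB_eq Hset_def classf_zero)

lemma sub_HA: "module.subspace scaleH (HA G)"
proof -
  interpret V: vector_space scaleH by (rule vs_scaleH)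
  show ?thesis unfolding V.subspace_def
    by (auto simp: HA_eq classf_zero classf_add scaleH_def classf_scale fun_eq_iff)
qed

lemma sub_HB: "module.subspace scaleH (HB G)"
proof -
  interpret V: vector_space scaleH by (rule vs_scaleH)
  show ?thesis unfolding V.subspace_def
    by (auto simp: HB_eq invm_zero invm_add scaleH_def invm_scale fun_eq_iff)
qed

lemma sub_H: "module.subspace scaleH Hset"
proof -
  interpret V: vector_space scaleH by (rule vs_scaleH)
  show ?thesis unfolding V.subspace_def
    by (auto simp: Hset_def classf_zero classf_add invm_zero invm_add scaleH_def classf_scale invm_scale)
qed

lemma span_H: "module.span scaleH (eA ` C \<union> eB ` (Xs \<times> Xs)) = Hset"
proof -
  interpret V: vector_space scaleH by (rule vs_scaleH)
  let ?S = "eA ` C \<union> eB ` (Xs \<times> Xs)"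
  show ?thesis
  proof
    have SH: "?S \<subseteq> Hset"
    proof
      fix x assume "x \<in> ?S"
      then show "x \<in> Hset"
      proof
        assume "x \<in> eA ` C" then obtain g where "g \<in> C" "x = eA g" by auto
        then show "x \<in> Hset" using eA_in HA_Hset by auto
      next
        assume "x \<in> eB ` (Xs \<times> Xs)" then obtain p where "p \<in> Xs \<times> Xs" "x = eB p" by auto
        then show "x \<in> Hset" using eB_in HB_Hset by auto
      qed
    qed
    show "V.span ?S \<subseteq> Hset" by (rule V.span_minimal[OF SH sub_H])
    show "Hset \<subseteq> V.span ?S"
    proof
      fix x assume x: "x \<in> Hset"
      have xa: "(fst x, 0) \<in> HA G" and xb: "(0, snd x) \<in> HB G" using x by (auto simp: Hset_def HA_eq HB_eq)
      have "(fst x, 0) \<in> V.span ?S"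
      proof -
        have "(\<Sum>g\<in>C. scaleH (\<Sum>k\<in>C. EA g k * formH G (eA k) (fst x, 0)) (eA g)) \<in> V.span ?S"
          by (intro V.span_sum V.span_scale V.span_base) simp
        then show ?thesis using frameA[OF xa] by simp
      qed
      moreover have "(0, snd x) \<in> V.span ?S"
      proof -
        have "(\<Sum>p\<in>Xs \<times> Xs. scaleH (\<Sum>q\<in>Xs \<times> Xs. EB p q * formH G (eB q) (0, snd x)) (eB p)) \<in> V.span ?S"
          by (intro V.span_sum V.span_scale V.span_base) simp
        then show ?thesis using frameB[OF xb] by simp
      qed
      ultimately have "(fst x, 0) + (0, snd x) \<in> V.span ?S" by (rule V.span_add)
      then show "x \<in> V.span ?S" by simp
    qed
  qed
qed

definition idX :: "'g \<Rightarrow> 'g \<Rightarrow> complex" where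
  "idX = (\<lambda>u v. if u \<in> Xs \<and> v \<in> Xs \<and> u = v then 1 else 0)"

lemma invm_idX: "invm idX"
proof (rule invmI)
  fix u v assume "u \<notin> Xs \<or> v \<notin> Xs" then show "idX u v = 0" by (auto simp: idX_def)
next
  fix h u v assume "h \<in> C" "u \<in> C" "v \<in> C"
  then show "idX (cj h u) (cj h v) = idX u v" by (simp add: idX_def Xs_cj cj_inj)
qed

lemma mmul_idX_left: assumes b: "invm b" shows "mmul G idX b = b"
proof (intro ext)
  fix u v
  show "mmul G idX b u v = b u v"
  proof (cases "u \<in> Xs")
    case True
    have "mmul G idX b u v = (\<Sum>z\<in>C. if z = u then b z v else 0)"
      unfolding mmul_def by (intro sum.cong refl) (auto simp: idX_def True)
    then show ?thesis using True Xs_sub by (auto simp: delta_sum)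
  next
    case False then show ?thesis using invm_supp[OF b] by (simp add: mmul_def idX_def)
  qed
qed

lemma mmul_idX_right: assumes b: "invm b" shows "mmul G b idX = b"
proof (intro ext)
  fix u v
  show "mmul G b idX u v = b u v"
  proof (cases "v \<in> Xs")
    case True
    have "mmul G b idX u v = (\<Sum>z\<in>C. if z = v then b u z else 0)"
      unfolding mmul_def by (intro sum.cong refl) (auto simp: idX_def True)
    then show ?thesis using True Xs_sub by (auto simp: delta_sum)
  next
    case False then show ?thesis using invm_supp[OF b] by (simp add: mmul_def idX_def)
  qed
qed

lemma cond6: assumes BA: "basis_invgram scaleH (formH G) (HA G) n f F"
  shows "multH G (Uf, 0) (Uf, 0) = K_star scaleH (multH G) (starH G) n f F"
proof -
  interpret V: vector_space scaleH by (rule vs_scaleH)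
  have UA: "(Uf, 0) \<in> HA G" by (simp add: HA_eq classf_Uf)
  have fA: "\<And>i. i < n \<Longrightarrow> f i \<in> HA G" using BA by (auto simp: basis_invgram_def)
  have KA: "K_star scaleH (multH G) (starH G) n f F \<in> HA G"
    unfolding K_star_def
    by (intro V.subspace_sum[OF sub_HA] V.subspace_scale[OF sub_HA] multH_A_in starH_A fA) auto
  have UU: "multH G (Uf, 0) (Uf, 0) \<in> HA G" using multH_A_in[OF UA UA] .
  let ?D = "multH G (Uf, 0) (Uf, 0) - K_star scaleH (multH G) (starH G) n f F"
  have DA: "?D \<in> HA G" by (rule V.subspace_diff[OF sub_HA UU KA])
  have "\<forall>y\<in>HA G. formH G ?D y = 0"
  proof
    fix y assume y: "y \<in> HA G"
    obtain w where yw: "y = (w, 0)" and w: "classf w" using y by (cases y) (auto simp: HA_eq)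
    have "formH G (K_star scaleH (multH G) (starH G) n f F) y
        = (\<Sum>i<n. \<Sum>j<n. F i j * formH G (multH G (f i) (starH G (f j))) y)" by (rule Kstar_form)
    also have "\<dots> = (\<Sum>g\<in>C. formH G (multH G (eA g) (starH G (eA (inv g)))) y / nn)"
      by (rule changeA[OF BA bilin_67])
    also have "\<dots> = (\<Sum>g\<in>C. conv G (conv G (clsf g) (clsf g)) w \<one> / nn / nn)"
      by (intro sum.cong refl) (simp add: starH_eq eA_def sta_clsf yw multH_def formH_A lam0)
    also have "\<dots> = (\<Sum>g\<in>C. \<Sum>h\<in>C. conv G (clsf g) (clsf g) h * w (inv h) / nn / nn)"
      by (simp add: conv_in sum_divide_distrib)
    also have "\<dots> = (\<Sum>h\<in>C. (\<Sum>g\<in>C. conv G (clsf g) (clsf g) h) * w (inv h) / nn / nn)"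
      by (subst sum.swap) (simp add: sum_divide_distrib sum_distrib_right)
    also have "\<dots> = (\<Sum>h\<in>C. conv G Uf Uf h * w (inv h) / nn)"
      using nn_nz by (intro sum.cong refl) (simp add: conv_UU)
    also have "\<dots> = formH G (multH G (Uf, 0) (Uf, 0)) y"
      by (simp add: yw multH_def formH_A conv_in sum_divide_distrib)
    finally show "formH G ?D y = 0" by (simp add: formH_diff)
  qed
  then have "?D = 0" by (rule nondegA[OF DA])
  then show ?thesis by simp
qed

lemma cond7: assumes BB: "basis_invgram scaleH (formH G) (HB G) m g Gm" and b: "b \<in> HB G"
  shows "formH G (Uf, 0) b = formH G (K_star scaleH (multH G) (starH G) m g Gm) b"
proof -
  obtain \<beta> where e: "b = (0, \<beta>)" and i: "invm \<beta>" using b by (cases b) (auto simp: HB_eq)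
  have "formH G (K_star scaleH (multH G) (starH G) m g Gm) b
      = (\<Sum>i<m. \<Sum>j<m. Gm i j * formH G (multH G (g i) (starH G (g j))) b)" by (rule Kstar_form)
  also have "\<dots> = (\<Sum>p\<in>Xs \<times> Xs. formH G (multH G (eB p) (starH G (eB (snd p, fst p)))) b / nn)"
    by (rule changeB[OF BB bilin_67])
  also have "\<dots> = formH G (Uf, 0) b" unfolding e by (rule comp7[OF i])
  finally show ?thesis by simp
qed

lemma cond8H: assumes a: "a \<in> HA G" shows "starH G (multH G a (Uf, 0)) = multH G a (Uf, 0)"
proof -
  obtain \<alpha> where e: "a = (\<alpha>, 0)" and c: "classf \<alpha>" using a by (cases a) (auto simp: HA_eq)
  show ?thesis using comp8[OF c] by (simp add: e multH_def starH_eq fun_eq_iff)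
qed

end

context fgrp begin

lemma main: "\<exists>U \<in> HA G. structure_algebra scaleH (HA G) (HB G) (multH G) (oneH G) (formH G) (starH G) U"
proof (rule bexI[of _ "(Uf, 0)"])
  show UA: "(Uf, 0) \<in> HA G" by (simp add: HA_eq classf_Uf)
  interpret V: vector_space scaleH by (rule vs_scaleH)
  show "structure_algebra scaleH (HA G) (HB G) (multH G) (oneH G) (formH G) (starH G) (Uf, 0)"
    unfolding structure_algebra_def Let_def direct_sum_eq
    apply (intro conjI)
    subgoal by (rule vs_scaleH)
    subgoal by (rule sub_HA)
    subgoal by (rule sub_HB)
    subgoal by (auto simp: HA_eq HB_eq zero_prod_def classf_zero invm_zero)
    subgoal using span_H eA_in eB_in HA_Hset HB_Hset Xs_finite fin
      by (intro exI[of _ "eA ` C \<union> eB ` (Xs \<times> Xs)"]) (auto)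
    subgoal by (auto intro: multH_closed)
    subgoal by (simp add: multH_add_left multH_add_right)
    subgoal by (simp add: multH_scale_left multH_scale_right)
    subgoal by (simp add: multH_assoc)
    subgoal by (rule oneH_in)
    subgoal by (simp add: oneH_left oneH_right)
    subgoal by (simp add: formH_add_left)
    subgoal by (simp add: formH_scale_left)
    subgoal by (simp add: formH_sym)
    subgoal by (simp add: formH_def multH_assoc)
    subgoal by (simp add: starH_closed)
    subgoal by (simp add: starH_add)
    subgoal by (simp add: starH_scale)
    subgoal by (simp add: starH_mult)
    subgoal by (simp add: starH_starH)
    subgoal by (rule UA)
    subgoal by (simp add: multH_A_in)
    subgoal
    proof (intro ballI)
      fix a x assume a: "a \<in> HA G" and x: "x \<in> Hset"
      obtain \<alpha> where ea: "a = (\<alpha>, 0)" and ca: "classf \<alpha>" using a by (cases a) (auto simp: HA_eq)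
      obtain x1 x2 where ex: "x = (x1, x2)" and ix: "invm x2" using x by (cases x) (auto simp: Hset_def)
      show "multH G a x = multH G x a"
        using classf_comm[OF ca, of x1] invm_comm[OF ix, of \<alpha>] by (simp add: ea ex multH_def)
    qed
    subgoal by (simp add: oneH_eq HA_eq classf_delta1)
    subgoal
    proof (intro ballI conjI)
      fix b x assume b: "b \<in> HB G" and x: "x \<in> Hset"
      obtain \<beta> where eb: "b = (0, \<beta>)" and ib: "invm \<beta>" using b by (cases b) (auto simp: HB_eq)
      obtain x1 x2 where ex: "x = (x1, x2)" and c1: "classf x1" and ix: "invm x2" using x by (cases x) (auto simp: Hset_def)
      show "multH G b x \<in> HB G"
        by (simp add: eb ex multH_def HB_eq invm_add invm_mmul[OF ib ix] invm_BV[OF c1 ib])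
      show "multH G x b \<in> HB G"
        by (simp add: eb ex multH_def HB_eq invm_add invm_mmul[OF ix ib] invm_VB[OF c1 ib])
    qed
    subgoal
    proof (intro bexI[of _ "(0, idX)"] ballI conjI)
      show "(0, idX) \<in> HB G" by (simp add: HB_eq invm_idX)
      fix b assume b: "b \<in> HB G"
      obtain \<beta> where eb: "b = (0, \<beta>)" and ib: "invm \<beta>" using b by (cases b) (auto simp: HB_eq)
      show "multH G (0, idX) b = b" by (simp add: eb multH_def mmul_idX_left[OF ib])
      show "multH G b (0, idX) = b" by (simp add: eb multH_def mmul_idX_right[OF ib])
    qed
    subgoal using nondegA by blast
    subgoal using nondegB by blast
    subgoal by (intro allI impI ballI) (rule cond4)
    subgoal
    proof
      show "starH G ` HA G \<subseteq> HA G" using starH_A by auto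
      show "HA G \<subseteq> starH G ` HA G"
      proof
        fix x assume x: "x \<in> HA G"
        have "x = starH G (starH G x)" using starH_starH[of x] x HA_Hset by auto
        then show "x \<in> starH G ` HA G" using starH_A[OF x] by blast
      qed
    qed
    subgoal
    proof
      show "starH G ` HB G \<subseteq> HB G" using starH_B by auto
      show "HB G \<subseteq> starH G ` HB G"
      proof
        fix x assume x: "x \<in> HB G"
        have "x = starH G (starH G x)" using starH_starH[of x] x HB_Hset by auto
        then show "x \<in> starH G ` HB G" using starH_B[OF x] by blast
      qed
    qed
    subgoal by (simp add: formH_star)
    subgoal by (intro allI impI) (rule cond6)
    subgoal by (intro allI impI ballI) (rule cond7)
    subgoal by (simp add: cond8H)
    done
qed

end

theorem theorem2p2:
  fixes G :: "'g monoid"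
  assumes "group G" and "finite (carrier G)"
  shows "\<exists>U \<in> HA G. structure_algebra scaleH (HA G) (HB G) (multH G) (oneH G) (formH G) (starH G) U"
proof -
  interpret fgrp G using assms by (simp add: fgrp_def fgrp_axioms_def)
  show ?thesis by (rule main)
qed


end
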